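(* For all $1\le k,\alpha,i\le m$, the element $T_{k\alpha i}$ lies in $H^{n-2,2}\oplus H^{n-3,3}$; that is, $T_{k\alpha i}=E_{k\alpha i}+D_kD_\alpha D_i\Omega$ with $E_{k\alpha i}\in H^{n-2,2}$ and $D_kD_\alpha D_i\Omega\in H^{n-3,3}$.
   Context: $\mathcal M$ is the moduli space of polarized Calabi–Yau $n$-folds ($n\ge3$), of complex dimension $m$, with local holomorphic coordinates $z_1,\dots,z_m$, $\partial_i=\partial/\partial z_i$. Locally the primitive middle cohomology of the fibres is identified with one fixed space $H$, carrying the varying Hodge decomposition $H=\bigoplus_{p+q=n}H^{p,q}$. $Q(\phi,\psi)=(-1)^{n(n-1)/2}\int\phi\wedge\psi$, $(\xi,\eta)=(\sqrt{-1})^nQ(\xi,\eta)$. $\Omega$ is a nonzero local holomorphic section of $F^n$. Weil–Petersson metric $g_{i\bar j}=-\partial_i\bar\partial_j\log(\Omega,\bar\Omega)$, Christoffel symbols $\Gamma^k_{ij}=g^{k\bar q}\partial_jg_{i\bar q}$, $K_i=-\partial_i\log(\Omega,\bar\Omega)$, $D_i\Omega=\partial_i\Omega+K_i\Omega$, $D_jD_i\Omega=\partial_jD_i\Omega-\sum_k\Gamma^k_{ij}D_k\Omega+K_jD_i\Omega$, and $T_{k\alpha i}=\partial_kD_\alpha D_i\Omega+K_kD_\alpha D_i\Omega-\sum_p\Gamma^p_{\alpha k}D_pD_i\Omega-\sum_p\Gamma^p_{ik}D_\alpha D_p\Omega$. $D_kD_\alpha D_i\Omega$ denotes the $H^{n-3,3}$-component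 of $T_{k\alpha i}$ and $E_{k\alpha i}=T_{k\alpha i}-D_kD_\alpha D_i\Omega$. *)

theory Defs
  imports "HOL-Analysis.Analysis"
begin

text \<open>Local coordinates z = (z_1,...,z_m) on the moduli space are points of complex^'m
  (CARD('m) = m); the fixed cohomology space H is complex^'d with a fixed real structure
  (componentwise complex conjugation).\<close>

definition vconj :: "complex^'d \<Rightarrow> complex^'d" where
  "vconj v = (\<chi> c. cnj (v $ c))"

definition dre :: "(complex^'m \<Rightarrow> complex) \<Rightarrow> 'm \<Rightarrow> complex^'m \<Rightarrow> complex" where
  "dre f i z = vector_derivative (\<lambda>t::real. f (z + t *\<^sub>R axis i 1)) (at 0)"

definition dim :: "(complex^'m \<Rightarrow> complex) \<Rightarrow> 'm \<Rightarrow> complex^'m \<Rightarrow> complex" where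
  "dim f i z = vector_derivative (\<lambda>t::real. f (z + t *\<^sub>R axis i \<i>)) (at 0)"

definition wd :: "(complex^'m \<Rightarrow> complex) \<Rightarrow> 'm \<Rightarrow> complex^'m \<Rightarrow> complex" where
  "wd f i z = (dre f i z - \<i> * dim f i z) / 2"

definition wdb :: "(complex^'m \<Rightarrow> complex) \<Rightarrow> 'm \<Rightarrow> complex^'m \<Rightarrow> complex" where
  "wdb f i z = (dre f i z + \<i> * dim f i z) / 2"

definition wdv :: "(complex^'m \<Rightarrow> complex^'d) \<Rightarrow> 'm \<Rightarrow> complex^'m \<Rightarrow> complex^'d" where
  "wdv f i z = (\<chi> c. wd (\<lambda>w. f w $ c) i z)"

definition holo :: "(complex^'m) set \<Rightarrow> (complex^'m \<Rightarrow> complex^'d) \<Rightarrow> bool" where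
  "holo V f \<longleftrightarrow> open V \<and> (\<forall>z\<in>V. f differentiable (at z)) \<and>
     (\<forall>z\<in>V. \<forall>i c. wdb (\<lambda>w. f w $ c) i z = 0)"

definition csubspace :: "(complex^'d) set \<Rightarrow> bool" where
  "csubspace S \<longleftrightarrow> 0 \<in> S \<and> (\<forall>x\<in>S. \<forall>y\<in>S. x + y \<in> S) \<and> (\<forall>c. \<forall>x\<in>S. c *s x \<in> S)"

definition cbilinear :: "(complex^'d \<Rightarrow> complex^'d \<Rightarrow> complex) \<Rightarrow> bool" where
  "cbilinear Q \<longleftrightarrow>
     (\<forall>x y z. Q (x + y) z = Q x z + Q y z) \<and> (\<forall>x y z. Q x (y + z) = Q x y + Q x z) \<and>
     (\<forall>c x y. Q (c *s x) y = c * Q x y) \<and> (\<forall>c x y. Q x (c *s y) = c * Q x y)"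

text \<open>Hodge filtration F^p = H^{n,0} + ... + H^{p,n-p}; Hd z p stands for H^{p,n-p} at z.\<close>
definition Fil :: "(complex^'m \<Rightarrow> nat \<Rightarrow> (complex^'d) set) \<Rightarrow> nat \<Rightarrow> complex^'m \<Rightarrow> nat \<Rightarrow> (complex^'d) set" where
  "Fil Hd n z p = {v. \<exists>f. (\<forall>r. f r \<in> Hd z r) \<and> v = (\<Sum>r\<in>{p..n}. f r)}"

text \<open>Polarized variation of Hodge structure of weight n and Calabi--Yau type over the
  coordinate chart U, with holomorphic generator \<Omega> of F^n, whose Kodaira--Spencer map is an
  isomorphism (the z_i are local coordinates of the moduli space).\<close>
definition CY_VHS ::
  "nat \<Rightarrow> (complex^'m) set \<Rightarrow> (complex^'d \<Rightarrow> complex^'d \<Rightarrow> complex) \<Rightarrow>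
   (complex^'m \<Rightarrow> nat \<Rightarrow> (complex^'d) set) \<Rightarrow> (complex^'m \<Rightarrow> complex^'d) \<Rightarrow> bool" where
  "CY_VHS n U Q Hd \<Omega> \<longleftrightarrow>
     open U \<and>
     cbilinear Q \<and>
     (\<forall>x y. Q x y = (-1)^n * Q y x) \<and>
     (\<forall>x y. Q (vconj x) (vconj y) = cnj (Q x y)) \<and>
     (\<forall>z\<in>U.
        (\<forall>p\<le>n. csubspace (Hd z p)) \<and>
        (\<forall>p. n < p \<longrightarrow> Hd z p = {0}) \<and>
        (\<forall>v. \<exists>!f. (\<forall>p. f p \<in> Hd z p) \<and> v = (\<Sum>p\<le>n. f p)) \<and>
        (\<forall>p\<le>n. vconj ` Hd z p = Hd z (n - p)) \<and>
        (\<forall>p\<le>n. \<forall>r\<le>n. p + r \<noteq> n \<longrightarrow> (\<forall>x\<in>Hd z p. \<forall>y\<in>Hd z r. Q x y = 0)) \<and>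
        (\<forall>p\<le>n. \<forall>x\<in>Hd z p. x \<noteq> 0 \<longrightarrow>
            Im (\<i>^p * (-\<i>)^(n-p) * Q x (vconj x)) = 0 \<and>
            Re (\<i>^p * (-\<i>)^(n-p) * Q x (vconj x)) > 0) \<and>
        \<Omega> z \<noteq> 0 \<and> \<Omega> z \<in> Hd z n \<and> (\<forall>x\<in>Hd z n. \<exists>c. x = c *s \<Omega> z) \<and>
        (\<forall>v\<in>Hd z (n - 1). \<exists>!c::'m \<Rightarrow> complex. v - (\<Sum>i\<in>UNIV. c i *s wdv \<Omega> i z) \<in> Hd z n)) \<and>
     holo U \<Omega> \<and>
     (\<forall>V s p. V \<subseteq> U \<longrightarrow> holo V s \<longrightarrow> 1 \<le> p \<longrightarrow> p \<le> n \<longrightarrow>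
        (\<forall>w\<in>V. s w \<in> Fil Hd n w p) \<longrightarrow>
        (\<forall>w\<in>V. \<forall>i. wdv s i w \<in> Fil Hd n w (p - 1)))"

definition pairing :: "nat \<Rightarrow> (complex^'d \<Rightarrow> complex^'d \<Rightarrow> complex) \<Rightarrow> complex^'d \<Rightarrow> complex^'d \<Rightarrow> complex" where
  "pairing n Q x y = \<i>^n * Q x y"

definition logN :: "nat \<Rightarrow> (complex^'d \<Rightarrow> complex^'d \<Rightarrow> complex) \<Rightarrow> (complex^'m \<Rightarrow> complex^'d) \<Rightarrow> complex^'m \<Rightarrow> complex" where
  "logN n Q \<Omega> z = Ln (pairing n Q (\<Omega> z) (vconj (\<Omega> z)))"

definition Kf :: "nat \<Rightarrow> (complex^'d \<Rightarrow> complex^'d \<Rightarrow> complex) \<Rightarrow> (complex^'m \<Rightarrow> complex^'d) \<Rightarrow> 'm \<Rightarrow> complex^'m \<Rightarrow> complex" where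
  "Kf n Q \<Omega> i z = - wd (logN n Q \<Omega>) i z"

definition gWP :: "nat \<Rightarrow> (complex^'d \<Rightarrow> complex^'d \<Rightarrow> complex) \<Rightarrow> (complex^'m \<Rightarrow> complex^'d) \<Rightarrow> 'm \<Rightarrow> 'm \<Rightarrow> complex^'m \<Rightarrow> complex" where
  "gWP n Q \<Omega> i j z = - wd (\<lambda>w. wdb (logN n Q \<Omega>) j w) i z"

text \<open>inverse metric g^{k qbar}, characterised by  sum_q g^{k qbar} g_{p qbar} = delta_{kp}\<close>
definition gInv :: "nat \<Rightarrow> (complex^'d \<Rightarrow> complex^'d \<Rightarrow> complex) \<Rightarrow> (complex^'m \<Rightarrow> complex^'d) \<Rightarrow> 'm \<Rightarrow> 'm \<Rightarrow> complex^'m \<Rightarrow> complex" where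
  "gInv n Q \<Omega> k q z = matrix_inv (transpose (\<chi> i j. gWP n Q \<Omega> i j z)) $ k $ q"

definition Gam :: "nat \<Rightarrow> (complex^'d \<Rightarrow> complex^'d \<Rightarrow> complex) \<Rightarrow> (complex^'m \<Rightarrow> complex^'d) \<Rightarrow> 'm \<Rightarrow> 'm \<Rightarrow> 'm \<Rightarrow> complex^'m \<Rightarrow> complex" where
  "Gam n Q \<Omega> k i j z = (\<Sum>q\<in>UNIV. gInv n Q \<Omega> k q z * wd (gWP n Q \<Omega> i q) j z)"

definition D1 :: "nat \<Rightarrow> (complex^'d \<Rightarrow> complex^'d \<Rightarrow> complex) \<Rightarrow> (complex^'m \<Rightarrow> complex^'d) \<Rightarrow> 'm \<Rightarrow> complex^'m \<Rightarrow> complex^'d" where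
  "D1 n Q \<Omega> i z = wdv \<Omega> i z + Kf n Q \<Omega> i z *s \<Omega> z"

definition D2 :: "nat \<Rightarrow> (complex^'d \<Rightarrow> complex^'d \<Rightarrow> complex) \<Rightarrow> (complex^'m \<Rightarrow> complex^'d) \<Rightarrow> 'm \<Rightarrow> 'm \<Rightarrow> complex^'m \<Rightarrow> complex^'d" where
  "D2 n Q \<Omega> j i z = wdv (D1 n Q \<Omega> i) j z - (\<Sum>k\<in>UNIV. Gam n Q \<Omega> k i j z *s D1 n Q \<Omega> k z)
      + Kf n Q \<Omega> j z *s D1 n Q \<Omega> i z"

definition Tt :: "nat \<Rightarrow> (complex^'d \<Rightarrow> complex^'d \<Rightarrow> complex) \<Rightarrow> (complex^'m \<Rightarrow> complex^'d) \<Rightarrow> 'm \<Rightarrow> 'm \<Rightarrow> 'm \<Rightarrow> complex^'m \<Rightarrow> complex^'d" where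
  "Tt n Q \<Omega> k \<alpha> i z = wdv (D2 n Q \<Omega> \<alpha> i) k z + Kf n Q \<Omega> k z *s D2 n Q \<Omega> \<alpha> i z
      - (\<Sum>p\<in>UNIV. Gam n Q \<Omega> p \<alpha> k z *s D2 n Q \<Omega> p i z)
      - (\<Sum>p\<in>UNIV. Gam n Q \<Omega> p i k z *s D2 n Q \<Omega> \<alpha> p z)"

end

theory Submission
  imports Defs "HOL-Complex_Analysis.Complex_Analysis"
begin

definition chol :: "(complex^'m) set \<Rightarrow> (complex^'m \<Rightarrow> complex) \<Rightarrow> bool" where
  "chol U f \<longleftrightarrow> open U \<and> (\<forall>z\<in>U. \<exists>L. (f has_derivative L) (at z) \<and> (\<forall>c h. L (c *s h) = c * L h))"

definition dv :: "(complex^'m \<Rightarrow> complex) \<Rightarrow> complex^'m \<Rightarrow> complex^'m \<Rightarrow> complex" where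
  "dv f z = frechet_derivative f (at z)"

lemma chol_D:
  assumes "chol U f" "z \<in> U"
  shows "(f has_derivative dv f z) (at z)" "dv f z (c *s h) = c * dv f z h"
proof -
  obtain L where L: "(f has_derivative L) (at z)" "\<forall>c h. L (c *s h) = c * L h"
    using assms unfolding chol_def by blast
  have "L = dv f z" unfolding dv_def using frechet_derivative_at[OF L(1)] .
  then show "(f has_derivative dv f z) (at z)" "dv f z (c *s h) = c * dv f z h"
    using L by auto
qed

lemma chol_open: "chol U f \<Longrightarrow> open U" unfolding chol_def by auto

lemma norm_smult_vec: "norm (c *s (v::complex^'m)) = cmod c * norm v"
  unfolding norm_vec_def by (simp add: norm_mult L2_set_right_distrib)

lemma bl_smult: "bounded_linear (\<lambda>h::complex. h *s (v::complex^'m))"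
proof (rule bounded_linear_intro[where K="norm v"])
  show "\<And>x y. (x + y) *s v = x *s v + y *s v" by (simp add: vector_add_ldistrib algebra_simps vec_eq_iff)
  show "\<And>r x. (r *\<^sub>R x) *s v = r *\<^sub>R (x *s v)" by (simp add: vec_eq_iff mult_scaleR_left)
  show "\<And>x. norm (x *s v) \<le> norm x * norm v" by (simp add: norm_smult_vec)
qed

lemma chol_line:
  assumes ch: "chol U f" and u: "w + \<zeta> *s v \<in> U"
  shows "((\<lambda>\<zeta>. f (w + \<zeta> *s v)) has_field_derivative dv f (w + \<zeta> *s v) v) (at \<zeta>)"
proof -
  have d1: "((\<lambda>\<zeta>. w + \<zeta> *s v) has_derivative (\<lambda>h. h *s v)) (at \<zeta>)"
    using bounded_linear_imp_has_derivative[OF bl_smult[of v]]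
    by (auto intro!: derivative_eq_intros)
  have "((\<lambda>\<zeta>. f (w + \<zeta> *s v)) has_derivative (\<lambda>h. dv f (w + \<zeta> *s v) (h *s v))) (at \<zeta>)"
    by (rule has_derivative_compose[OF d1 chol_D(1)[OF ch u]])
  moreover have "(\<lambda>h. dv f (w + \<zeta> *s v) (h *s v)) = (*) (dv f (w + \<zeta> *s v) v)"
  proof
    fix h
    have "h *s v = h *s v" ..
    show "dv f (w + \<zeta> *s v) (h *s v) = dv f (w + \<zeta> *s v) v * h"
      using chol_D(2)[OF ch u, of h v] by simp
  qed
  ultimately show ?thesis unfolding has_field_derivative_def by simp
qed

lemma chol_cont: assumes ch: "chol U f" shows "continuous_on U f"
  by (meson ch chol_D(1) continuous_at_imp_continuous_on has_derivative_continuous)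

definition cp :: "real \<Rightarrow> real \<Rightarrow> complex" where
  "cp \<rho> t = of_real \<rho> * exp (2 * of_real pi * \<i> * of_real t)"

definition kap :: "real \<Rightarrow> real \<Rightarrow> complex" where
  "kap \<rho> t = (2 * of_real pi * \<i>) / cp \<rho> t"

lemma norm_cp: "\<rho> \<ge> 0 \<Longrightarrow> cmod (cp \<rho> t) = \<rho>"
  unfolding cp_def by (simp add: norm_mult)

lemma cp_nz: "\<rho> > 0 \<Longrightarrow> cp \<rho> t \<noteq> 0"
  unfolding cp_def by simp

lemma cont_cp[continuous_intros]: "continuous_on S (\<lambda>x. cp \<rho> (g x))" if "continuous_on S g"
  unfolding cp_def by (intro continuous_intros that)

lemma cont_kap[continuous_intros]: "\<rho> > 0 \<Longrightarrow> continuous_on S g \<Longrightarrow> continuous_on S (\<lambda>x. kap \<rho> (g x))"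
  unfolding kap_def by (intro continuous_intros) (auto simp: cp_nz)

lemma cont_smult[continuous_intros]:
  "continuous_on S c \<Longrightarrow> continuous_on S (\<lambda>x. c x *s (v::complex^'m))"
  using bounded_linear.continuous_on[OF bl_smult] by blast

lemma chol_rep:
  assumes ch: "chol U f" and z: "z \<in> U"
  obtains \<epsilon> \<rho> where "\<epsilon> > 0" "\<rho> > 0" "ball z \<epsilon> \<subseteq> U"
    "\<And>w t. w \<in> ball z \<epsilon> \<Longrightarrow> w + cp \<rho> t *s v \<in> U"
    "\<And>w. w \<in> ball z \<epsilon> \<Longrightarrow> (2 * of_real pi * \<i>) * dv f w v =
        integral {0..1} (\<lambda>t. f (w + cp \<rho> t *s v) * kap \<rho> t)"
proof -
  have oU: "open U" using chol_open[OF ch] .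
  obtain e where e: "e > 0" "ball z e \<subseteq> U" using openE[OF oU z] by blast
  define \<epsilon> where "\<epsilon> = e / 2"
  define \<rho> where "\<rho> = e / (2 * (norm v + 1))"
  have \<epsilon>: "\<epsilon> > 0" using e by (simp add: \<epsilon>_def)
  have \<rho>: "\<rho> > 0" unfolding \<rho>_def using e by (intro divide_pos_pos) (auto intro: add_nonneg_pos)
  have \<rho>v: "\<rho> * norm v \<le> e / 2"
  proof -
    have "\<rho> * norm v = (e / 2) * (norm v / (norm v + 1))" by (simp add: \<rho>_def field_simps)
    also have "\<dots> \<le> (e / 2) * 1"
    proof (rule mult_left_mono)
      have "norm v \<le> norm v + 1" by simp
      then show "norm v / (norm v + 1) \<le> 1"
        by (metis divide_le_eq_1 norm_ge_zero add_nonneg_pos zero_less_one)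
    qed (use e in auto)
    finally show ?thesis by simp
  qed
  have geo: "w + \<zeta> *s v \<in> U" if w: "w \<in> ball z \<epsilon>" and zz: "cmod \<zeta> \<le> \<rho>" for w \<zeta>
  proof -
    have "dist z (w + \<zeta> *s v) \<le> dist z w + norm (\<zeta> *s v)"
      by (metis dist_norm norm_diff_triangle_ineq diff_add_eq_diff_diff_swap add_diff_cancel_left'
           order_refl dist_triangle2 dist_add_cancel norm_minus_commute)
    also have "norm (\<zeta> *s v) \<le> \<rho> * norm v" unfolding norm_smult_vec
      by (intro mult_right_mono zz) auto
    finally have "dist z (w + \<zeta> *s v) < e" using w \<rho>v by (simp add: \<epsilon>_def)
    then show ?thesis using e by auto
  qed
  show ?thesis
  proof (rule that[OF \<epsilon> \<rho>])
    show "ball z \<epsilon> \<subseteq> U" using e by (auto simp: \<epsilon>_def)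
    show "w + cp \<rho> t *s v \<in> U" if "w \<in> ball z \<epsilon>" for w t
      using geo[OF that] norm_cp[of \<rho> t] \<rho> by simp
    fix w assume w: "w \<in> ball z \<epsilon>"
    define \<phi> where "\<phi> = (\<lambda>\<zeta>. f (w + \<zeta> *s v))"
    have der: "(\<phi> has_field_derivative dv f (w + \<zeta> *s v) v) (at \<zeta>)" if "\<zeta> \<in> cball 0 \<rho>" for \<zeta>
      unfolding \<phi>_def by (rule chol_line[OF ch geo[OF w]]) (use that in auto)
    have hol: "\<phi> holomorphic_on cball 0 \<rho>"
      using der by (meson field_differentiable_def field_differentiable_at_within holomorphic_on_def)
    have hol2: "\<phi> holomorphic_on ball 0 \<rho>" using hol holomorphic_on_subset by fastforce
    have cont: "continuous_on (cball 0 \<rho>) \<phi>" using holomorphic_on_imp_continuous_on[OF hol] .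
    have d0: "deriv \<phi> 0 = dv f w v"
      using DERIV_imp_deriv[OF der[of 0]] \<rho> by simp
    have ci: "((\<lambda>u. \<phi> u / (u - 0) ^ Suc 1) has_contour_integral ((2 * pi * \<i>) / fact 1 * (deriv ^^ 1) \<phi> 0))
           (circlepath 0 \<rho>)"
      by (rule Cauchy_has_contour_integral_higher_derivative_circlepath[OF cont hol2]) (use \<rho> in simp)
    have "((\<lambda>t. f (w + cp \<rho> t *s v) * kap \<rho> t) has_integral ((2 * pi * \<i>) * dv f w v)) {0..1}"
    proof -
      have "((\<lambda>x. \<phi> (circlepath 0 \<rho> x) / (circlepath 0 \<rho> x - 0) ^ Suc 1 *
                vector_derivative (circlepath 0 \<rho>) (at x within {0..1})) has_integral
            ((2 * pi * \<i>) * dv f w v)) {0..1}"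
        using ci d0 unfolding has_contour_integral_def by simp
      moreover have "\<phi> (circlepath 0 \<rho> x) / (circlepath 0 \<rho> x - 0) ^ Suc 1 *
                vector_derivative (circlepath 0 \<rho>) (at x within {0..1}) =
                f (w + cp \<rho> x *s v) * kap \<rho> x" if "x \<in> {0..1}" for x
      proof -
        have cx: "circlepath 0 \<rho> x = cp \<rho> x" by (simp add: circlepath cp_def)
        have vd: "vector_derivative (circlepath 0 \<rho>) (at x within {0..1}) = 2 * of_real pi * \<i> * cp \<rho> x"
          using vector_derivative_circlepath01[of x 0 \<rho>] that by (simp add: cp_def)
        show ?thesis unfolding cx vd \<phi>_def kap_def using cp_nz[OF \<rho>, of x]
          by (simp add: field_simps power2_eq_square)
      qed
      ultimately show ?thesis using has_integral_cong by (metis (no_types, lifting))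
    qed
    then show "(2 * of_real pi * \<i>) * dv f w v = integral {0..1} (\<lambda>t. f (w + cp \<rho> t *s v) * kap \<rho> t)"
      by (simp add: integral_unique)
  qed
qed

lemma chol_Hcont:
  assumes ch: "chol U f" and \<rho>: "\<rho> > 0"
    and sub: "\<And>w t. w \<in> B \<Longrightarrow> w + cp \<rho> t *s v \<in> U"
  shows "continuous_on (B \<times> S) (\<lambda>(w,t). f (w + cp \<rho> t *s v) * kap \<rho> t)"
proof -
  have "continuous_on (B \<times> S) (\<lambda>x. f (fst x + cp \<rho> (snd x) *s v) * kap \<rho> (snd x))"
  proof (intro continuous_on_mult continuous_on_compose2[OF chol_cont[OF ch]])
    show "continuous_on (B \<times> S) (\<lambda>x. fst x + cp \<rho> (snd x) *s v)"
      by (intro continuous_intros)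
    show "continuous_on (B \<times> S) (\<lambda>x. kap \<rho> (snd x))"
      using \<rho> by (intro continuous_intros)
  qed (use sub in auto)
  then show ?thesis by (simp add: case_prod_beta')
qed

lemma chol_dv_cont:
  assumes ch: "chol U f" shows "continuous_on U (\<lambda>w. dv f w v)"
proof -
  have oU: "open U" using chol_open[OF ch] .
  have "isCont (\<lambda>w. dv f w v) z" if z: "z \<in> U" for z
  proof -
    obtain \<epsilon> \<rho> where e: "\<epsilon> > 0" "\<rho> > 0" "ball z \<epsilon> \<subseteq> U"
      and sub: "\<And>w t. w \<in> ball z \<epsilon> \<Longrightarrow> w + cp \<rho> t *s v \<in> U"
      and rep: "\<And>w. w \<in> ball z \<epsilon> \<Longrightarrow> (2 * of_real pi * \<i>) * dv f w v =
        integral {0..1} (\<lambda>t. f (w + cp \<rho> t *s v) * kap \<rho> t)"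
      by (rule chol_rep[OF ch z, of v]) blast
    have "continuous_on (ball z \<epsilon>) (\<lambda>w. integral (cbox 0 1) (\<lambda>t. f (w + cp \<rho> t *s v) * kap \<rho> t))"
      by (rule integral_continuous_on_param[OF chol_Hcont[OF ch e(2) sub]])
    then have "continuous_on (ball z \<epsilon>) (\<lambda>w. integral {0..1} (\<lambda>t. f (w + cp \<rho> t *s v) * kap \<rho> t) / (2 * of_real pi * \<i>))"
      by (intro continuous_intros) auto
    moreover have "integral {0..1} (\<lambda>t. f (w + cp \<rho> t *s v) * kap \<rho> t) / (2 * of_real pi * \<i>) = dv f w v"
      if "w \<in> ball z \<epsilon>" for w
      using rep[OF that] by (simp add: field_simps)
    ultimately have "continuous_on (ball z \<epsilon>) (\<lambda>w. dv f w v)"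
      using continuous_on_cong by (metis (no_types, lifting))
    then show ?thesis using e(1) by (simp add: continuous_on_eq_continuous_at)
  qed
  then show ?thesis by (simp add: continuous_at_imp_continuous_on)
qed

lemma chol_bl: "chol U f \<Longrightarrow> y \<in> U \<Longrightarrow> bounded_linear (\<lambda>h. dv f y h * c)"
  using bounded_linear_compose[OF bounded_linear_mult_left has_derivative_bounded_linear[OF chol_D(1)]]
  by blast

lemma chol_dv:
  assumes ch: "chol U f" shows "chol U (\<lambda>w. dv f w v)"
  unfolding chol_def
proof (intro conjI ballI)
  show oU: "open U" using chol_open[OF ch] .
  fix z assume z: "z \<in> U"
  obtain \<epsilon> \<rho> where e: "\<epsilon> > 0" "\<rho> > 0" "ball z \<epsilon> \<subseteq> U"
    and sub: "\<And>w t. w \<in> ball z \<epsilon> \<Longrightarrow> w + cp \<rho> t *s v \<in> U"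
    and rep: "\<And>w. w \<in> ball z \<epsilon> \<Longrightarrow> (2 * of_real pi * \<i>) * dv f w v =
      integral {0..1} (\<lambda>t. f (w + cp \<rho> t *s v) * kap \<rho> t)"
    by (rule chol_rep[OF ch z, of v]) blast
  define B where "B = ball z \<epsilon>"
  define H where "H = (\<lambda>w t. f (w + cp \<rho> t *s v) * kap \<rho> t)"
  define fx where "fx = (\<lambda>w t. Blinfun (\<lambda>h. dv f (w + cp \<rho> t *s v) h * kap \<rho> t))"
  have fxa: "blinfun_apply (fx w t) = (\<lambda>h. dv f (w + cp \<rho> t *s v) h * kap \<rho> t)" if "w \<in> B" for w t
    unfolding fx_def by (rule bounded_linear_Blinfun_apply[OF chol_bl[OF ch sub]]) (use that B_def in auto)
  have zB: "z \<in> B" using e by (simp add: B_def)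
  have cB: "convex B" by (simp add: B_def)
  have hd: "((\<lambda>w. H w t) has_derivative blinfun_apply (fx w t)) (at w within B)"
    if w: "w \<in> B" "t \<in> cbox 0 1" for w t
  proof -
    have "((\<lambda>w. w + cp \<rho> t *s v) has_derivative (\<lambda>h. h)) (at w within B)"
      by (auto intro!: derivative_eq_intros)
    from has_derivative_compose[OF this chol_D(1)[OF ch sub]]
    have "((\<lambda>w. f (w + cp \<rho> t *s v)) has_derivative dv f (w + cp \<rho> t *s v)) (at w within B)"
      using w B_def by simp
    from has_derivative_mult_left[OF this, of "kap \<rho> t"]
    show ?thesis unfolding fxa[OF w(1)] H_def .
  qed
  have Hc: "continuous_on (B \<times> cbox 0 1) (\<lambda>(w,t). H w t)"
    unfolding H_def B_def by (rule chol_Hcont[OF ch e(2) sub])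
  have Hi: "H w integrable_on cbox 0 1" if "w \<in> B" for w
  proof (rule integrable_continuous)
    show "continuous_on (cbox 0 1) (H w)"
    proof -
      have "continuous_on (cbox 0 1) (\<lambda>t. (\<lambda>(w,t). H w t) (w,t))"
        by (rule continuous_on_compose2[OF Hc]) (auto intro!: continuous_intros simp: that)
      then show ?thesis by simp
    qed
  qed
  have fxc: "continuous_on (B \<times> cbox 0 1) (\<lambda>(w,t). fx w t)"
  proof (rule continuous_on_blinfun_componentwise)
    fix i
    have "continuous_on (B \<times> cbox 0 1) (\<lambda>x. dv f (fst x + cp \<rho> (snd x) *s v) i * kap \<rho> (snd x))"
    proof (intro continuous_on_mult continuous_on_compose2[OF chol_dv_cont[OF ch, of i]])
      show "continuous_on (B \<times> cbox 0 1) (\<lambda>x. fst x + cp \<rho> (snd x) *s v)"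
        by (intro continuous_intros)
      show "continuous_on (B \<times> cbox 0 1) (\<lambda>x. kap \<rho> (snd x))"
        using e by (intro continuous_intros)
    qed (use sub B_def in auto)
    then show "continuous_on (B \<times> cbox 0 1) (\<lambda>x. blinfun_apply (case x of (w,t) \<Rightarrow> fx w t) i)"
      by (rule continuous_on_eq) (auto simp: fxa)
  qed
  have L: "((\<lambda>w. integral (cbox 0 1) (H w)) has_derivative blinfun_apply (integral (cbox 0 1) (fx z))) (at z within B)"
    by (rule leibniz_rule[OF hd Hi fxc zB cB])
  then have L2: "((\<lambda>w. integral (cbox 0 1) (H w)) has_derivative blinfun_apply (integral (cbox 0 1) (fx z))) (at z)"
    using at_within_open[OF zB] by (simp add: B_def)
  define c0 where "c0 = 1 / (2 * of_real pi * \<i> :: complex)"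
  have L3: "((\<lambda>w. integral (cbox 0 1) (H w) * c0) has_derivative (\<lambda>h. blinfun_apply (integral (cbox 0 1) (fx z)) h * c0)) (at z)"
    by (rule has_derivative_mult_left[OF L2])
  have eq: "integral (cbox 0 1) (H w) * c0 = dv f w v" if "w \<in> B" for w
    using rep[of w] that unfolding B_def H_def c0_def by (simp add: field_simps)
  have L4: "((\<lambda>w. dv f w v) has_derivative (\<lambda>h. blinfun_apply (integral (cbox 0 1) (fx z)) h * c0)) (at z)"
    by (rule has_derivative_transform_within_open[OF L3 _ zB eq]) (simp add: B_def)
  have fxi: "fx z integrable_on cbox 0 1"
  proof (rule integrable_continuous)
    show "continuous_on (cbox 0 1) (fx z)"
    proof -
      have "continuous_on (cbox 0 1) (\<lambda>t. (\<lambda>(w,t). fx w t) (z,t))"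
        by (rule continuous_on_compose2[OF fxc]) (auto intro!: continuous_intros simp: zB)
      then show ?thesis by simp
    qed
  qed
  have lin: "blinfun_apply (integral (cbox 0 1) (fx z)) (c *s h) * c0 = c * (blinfun_apply (integral (cbox 0 1) (fx z)) h * c0)" for c h
  proof -
    have "blinfun_apply (integral (cbox 0 1) (fx z)) (c *s h) = integral (cbox 0 1) (\<lambda>t. fx z t (c *s h))"
      by (rule blinfun_apply_integral[OF fxi])
    also have "\<dots> = integral (cbox 0 1) (\<lambda>t. c * fx z t h)"
      using chol_D(2)[OF ch sub[OF zB[unfolded B_def]]] by (simp add: fxa[OF zB] mult.assoc)
    also have "\<dots> = c * integral (cbox 0 1) (\<lambda>t. fx z t h)" by simp
    also have "\<dots> = c * blinfun_apply (integral (cbox 0 1) (fx z)) h"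
      using blinfun_apply_integral[OF fxi, of h] by simp
    finally show ?thesis by simp
  qed
  show "\<exists>L. ((\<lambda>w. dv f w v) has_derivative L) (at z) \<and> (\<forall>c h. L (c *s h) = c * L h)"
    using L4 lin by blast
qed


definition Dir :: "complex^'m \<Rightarrow> (complex^'m \<Rightarrow> complex) \<Rightarrow> complex^'m \<Rightarrow> complex" where
  "Dir e f z = vector_derivative (\<lambda>t::real. f (z + t *\<^sub>R e)) (at 0)"

definition ld :: "complex^'m \<Rightarrow> (complex^'m \<Rightarrow> complex) \<Rightarrow> complex^'m \<Rightarrow> bool" where
  "ld e f z \<longleftrightarrow> (\<lambda>t::real. f (z + t *\<^sub>R e)) differentiable (at 0)"

lemma ld_D: "ld e f z \<Longrightarrow> ((\<lambda>t::real. f (z + t *\<^sub>R e)) has_vector_derivative Dir e f z) (at 0)"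
  unfolding ld_def Dir_def using vector_derivative_works by blast

lemma Dir_I: "((\<lambda>t::real. f (z + t *\<^sub>R e)) has_vector_derivative d) (at 0) \<Longrightarrow> ld e f z \<and> Dir e f z = d"
  unfolding ld_def Dir_def using vector_derivative_at differentiableI_vector by blast

lemma Dir_add: "ld e f z \<Longrightarrow> ld e g z \<Longrightarrow>
   ld e (\<lambda>w. f w + g w) z \<and> Dir e (\<lambda>w. f w + g w) z = Dir e f z + Dir e g z"
  by (rule Dir_I) (intro has_vector_derivative_add ld_D)

lemma Dir_mult: "ld e f z \<Longrightarrow> ld e g z \<Longrightarrow>
   ld e (\<lambda>w. f w * g w) z \<and> Dir e (\<lambda>w. f w * g w) z = Dir e f z * g z + f z * Dir e g z"
proof (rule Dir_I)
  assume "ld e f z" "ld e g z"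
  from has_vector_derivative_mult[OF ld_D[OF this(1)] ld_D[OF this(2)]]
  show "((\<lambda>t. f (z + t *\<^sub>R e) * g (z + t *\<^sub>R e)) has_vector_derivative Dir e f z * g z + f z * Dir e g z) (at 0)"
    by (simp add: add.commute)
qed

lemma Dir_cnj: "ld e f z \<Longrightarrow> ld e (\<lambda>w. cnj (f w)) z \<and> Dir e (\<lambda>w. cnj (f w)) z = cnj (Dir e f z)"
  by (rule Dir_I) (intro has_vector_derivative_cnj ld_D)

lemma Dir_const: "ld e (\<lambda>w. c) z \<and> Dir e (\<lambda>w. c) z = 0"
  by (rule Dir_I) simp

lemma Dir_inverse: "ld e f z \<Longrightarrow> f z \<noteq> 0 \<Longrightarrow>
   ld e (\<lambda>w. inverse (f w)) z \<and> Dir e (\<lambda>w. inverse (f w)) z = - Dir e f z * (inverse (f z) * inverse (f z))"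
proof (rule Dir_I)
  assume a: "ld e f z" "f z \<noteq> 0"
  have "(inverse has_field_derivative - (inverse (f z) ^ Suc (Suc 0))) (at ((\<lambda>t::real. f (z + t *\<^sub>R e)) 0))"
    using DERIV_inverse[of "f z" UNIV] a by simp
  from field_vector_diff_chain_at[OF ld_D[OF a(1)] this]
  show "((\<lambda>t. inverse (f (z + t *\<^sub>R e))) has_vector_derivative - Dir e f z * (inverse (f z) * inverse (f z))) (at 0)"
    by (simp add: o_def power2_eq_square)
qed

lemma Dir_Ln: "ld e f z \<Longrightarrow> f z \<notin> \<real>\<^sub>\<le>\<^sub>0 \<Longrightarrow>
   ld e (\<lambda>w. Ln (f w)) z \<and> Dir e (\<lambda>w. Ln (f w)) z = Dir e f z * inverse (f z)"
proof (rule Dir_I)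
  assume a: "ld e f z" "f z \<notin> \<real>\<^sub>\<le>\<^sub>0"
  have "(Ln has_field_derivative inverse (f z)) (at ((\<lambda>t::real. f (z + t *\<^sub>R e)) 0))"
    using has_field_derivative_Ln[of "f z"] a by simp
  from field_vector_diff_chain_at[OF ld_D[OF a(1)] this]
  show "((\<lambda>t. Ln (f (z + t *\<^sub>R e))) has_vector_derivative Dir e f z * inverse (f z)) (at 0)"
    by (simp add: o_def)
qed

lemma Dir_cong:
  assumes oU: "open U" and z: "z \<in> U" and eq: "\<And>w. w \<in> U \<Longrightarrow> f w = g w"
  shows "(ld e f z \<longleftrightarrow> ld e g z) \<and> Dir e f z = Dir e g z"
proof -
  define S where "S = {t::real. z + t *\<^sub>R e \<in> U}"
  have oS: "open S" unfolding S_def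
    by (rule open_vimage[OF oU, of "\<lambda>t. z + t *\<^sub>R e", unfolded vimage_def]) (intro continuous_intros)
  have S0: "0 \<in> S" using z by (simp add: S_def)
  have eqS: "\<And>t. t \<in> S \<Longrightarrow> f (z + t *\<^sub>R e) = g (z + t *\<^sub>R e)" using eq by (simp add: S_def)
  have iff: "((\<lambda>t::real. f (z + t *\<^sub>R e)) has_vector_derivative d) (at 0) \<longleftrightarrow>
             ((\<lambda>t::real. g (z + t *\<^sub>R e)) has_vector_derivative d) (at 0)" for d
    using has_vector_derivative_transform_within_open[OF _ oS S0, of "\<lambda>t. f (z + t *\<^sub>R e)" d "\<lambda>t. g (z + t *\<^sub>R e)"]
          has_vector_derivative_transform_within_open[OF _ oS S0, of "\<lambda>t. g (z + t *\<^sub>R e)" d "\<lambda>t. f (z + t *\<^sub>R e)"]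
          eqS by auto
  have "Dir e f z = Dir e g z" unfolding Dir_def vector_derivative_def using iff by simp
  moreover have "ld e f z \<longleftrightarrow> ld e g z"
    unfolding ld_def using iff vector_derivative_works differentiableI_vector by blast
  ultimately show ?thesis by simp
qed

lemma chol_ld:
  assumes ch: "chol U f" and z: "z \<in> U"
  shows "ld e f z \<and> Dir e f z = dv f z e"
proof (rule Dir_I)
  have d1: "((\<lambda>t::real. z + t *\<^sub>R e) has_derivative (\<lambda>t. t *\<^sub>R e)) (at 0)"
    by (auto intro!: derivative_eq_intros)
  have "((\<lambda>t::real. f (z + t *\<^sub>R e)) has_derivative (\<lambda>t. dv f z (t *\<^sub>R e))) (at 0)"
    using has_derivative_compose[OF d1, of f "dv f z"] chol_D(1)[OF ch z] by simp
  moreover have "(\<lambda>t. dv f z (t *\<^sub>R e)) = (\<lambda>t. t *\<^sub>R dv f z e)"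
    using linear_scale[OF has_derivative_linear[OF chol_D(1)[OF ch z]]] by auto
  ultimately show "((\<lambda>t::real. f (z + t *\<^sub>R e)) has_vector_derivative dv f z e) (at 0)"
    unfolding has_vector_derivative_def by simp
qed

fun dsm :: "nat \<Rightarrow> (complex^'m) set \<Rightarrow> (complex^'m \<Rightarrow> complex) \<Rightarrow> bool" where
  "dsm 0 U f = True"
| "dsm (Suc k) U f = ((\<forall>z\<in>U. \<forall>e. ld e f z) \<and> (\<forall>e. dsm k U (Dir e f)))"

definition sm :: "(complex^'m) set \<Rightarrow> (complex^'m \<Rightarrow> complex) \<Rightarrow> bool" where
  "sm U f \<longleftrightarrow> open U \<and> (\<forall>k. dsm k U f)"

lemma dsm_cong: "open U \<Longrightarrow> (\<And>w. w \<in> U \<Longrightarrow> f w = g w) \<Longrightarrow> dsm k U f \<Longrightarrow> dsm k U g"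
proof (induction k arbitrary: f g)
  case 0 then show ?case by simp
next
  case (Suc k)
  have ld: "\<forall>z\<in>U. \<forall>e. ld e g z" using Suc.prems Dir_cong[OF Suc.prems(1) _ Suc.prems(2)] by auto
  have "dsm k U (Dir e g)" for e
  proof (rule Suc.IH[OF Suc.prems(1)])
    show "dsm k U (Dir e f)" using Suc.prems by simp
    show "Dir e f w = Dir e g w" if "w \<in> U" for w using Dir_cong[OF Suc.prems(1) that Suc.prems(2)] by auto
  qed
  with ld show ?case by simp
qed

lemma dsm_mono: "dsm (Suc k) U f \<Longrightarrow> dsm k U f"
proof (induction k arbitrary: f)
  case 0 then show ?case by simp
next
  case (Suc k) then show ?case by auto
qed

lemma dsm_const: "dsm k U (\<lambda>w. c)"
proof (induction k arbitrary: c)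
  case 0 then show ?case by simp
next
  case (Suc k)
  have dc: "Dir e (\<lambda>w. c) = (\<lambda>w. 0)" for e using Dir_const by (auto simp: fun_eq_iff)
  show ?case by (simp add: dc Dir_const Suc.IH)
qed

lemma dsm_add: "open U \<Longrightarrow> dsm k U f \<Longrightarrow> dsm k U g \<Longrightarrow> dsm k U (\<lambda>w. f w + g w)"
proof (induction k arbitrary: f g)
  case 0 then show ?case by simp
next
  case (Suc k)
  have "dsm k U (Dir e (\<lambda>w. f w + g w))" for e
  proof (rule dsm_cong[OF Suc.prems(1)])
    show "dsm k U (\<lambda>w. Dir e f w + Dir e g w)" using Suc by simp
    show "Dir e f w + Dir e g w = Dir e (\<lambda>w. f w + g w) w" if "w \<in> U" for w
      using Dir_add[of e f w g] Suc.prems that by simp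
  qed
  then show ?case using Suc.prems by (auto simp: Dir_add)
qed

lemma dsm_cnj: "open U \<Longrightarrow> dsm k U f \<Longrightarrow> dsm k U (\<lambda>w. cnj (f w))"
proof (induction k arbitrary: f)
  case 0 then show ?case by simp
next
  case (Suc k)
  have "dsm k U (Dir e (\<lambda>w. cnj (f w)))" for e
  proof (rule dsm_cong[OF Suc.prems(1)])
    show "dsm k U (\<lambda>w. cnj (Dir e f w))" using Suc by simp
    show "cnj (Dir e f w) = Dir e (\<lambda>w. cnj (f w)) w" if "w \<in> U" for w
      using Dir_cnj[of e f w] Suc.prems that by simp
  qed
  then show ?case using Suc.prems by (auto simp: Dir_cnj)
qed

lemma dsm_mult: "open U \<Longrightarrow> dsm k U f \<Longrightarrow> dsm k U g \<Longrightarrow> dsm k U (\<lambda>w. f w * g w)"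
proof (induction k arbitrary: f g)
  case 0 then show ?case by simp
next
  case (Suc k)
  have "dsm k U (Dir e (\<lambda>w. f w * g w))" for e
  proof (rule dsm_cong[OF Suc.prems(1)])
    have "dsm k U f" "dsm k U g" using Suc.prems dsm_mono by blast+
    then show "dsm k U (\<lambda>w. Dir e f w * g w + f w * Dir e g w)"
      using Suc by (intro dsm_add Suc.IH) auto
    show "Dir e f w * g w + f w * Dir e g w = Dir e (\<lambda>w. f w * g w) w" if "w \<in> U" for w
      using Dir_mult[of e f w g] Suc.prems that by simp
  qed
  then show ?case using Suc.prems by (auto simp: Dir_mult)
qed

lemma dsm_inverse: "open U \<Longrightarrow> dsm k U f \<Longrightarrow> (\<And>w. w \<in> U \<Longrightarrow> f w \<noteq> 0) \<Longrightarrow> dsm k U (\<lambda>w. inverse (f w))"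
proof (induction k arbitrary: f)
  case 0 then show ?case by simp
next
  case (Suc k)
  have "dsm k U (Dir e (\<lambda>w. inverse (f w)))" for e
  proof (rule dsm_cong[OF Suc.prems(1)])
    have fk: "dsm k U f" using Suc.prems dsm_mono by blast
    show "dsm k U (\<lambda>w. (- 1) * Dir e f w * (inverse (f w) * inverse (f w)))"
      by (intro dsm_mult dsm_const Suc.IH) (use Suc.prems fk in auto)
    show "(- 1) * Dir e f w * (inverse (f w) * inverse (f w)) = Dir e (\<lambda>w. inverse (f w)) w" if "w \<in> U" for w
      using Dir_inverse[of e f w] Suc.prems that by simp
  qed
  then show ?case using Suc.prems by (auto simp: Dir_inverse)
qed

lemma dsm_Ln: "open U \<Longrightarrow> dsm k U f \<Longrightarrow> (\<And>w. w \<in> U \<Longrightarrow> f w \<notin> \<real>\<^sub>\<le>\<^sub>0) \<Longrightarrow> dsm k U (\<lambda>w. Ln (f w))"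
proof (cases k)
  case 0 then show ?thesis by simp
next
  case (Suc k')
  assume a: "open U" "dsm k U f" "\<And>w. w \<in> U \<Longrightarrow> f w \<notin> \<real>\<^sub>\<le>\<^sub>0"
  have nz: "f w \<noteq> 0" if "w \<in> U" for w using a(3)[OF that] by auto
  have "dsm k' U (Dir e (\<lambda>w. Ln (f w)))" for e
  proof (rule dsm_cong[OF a(1)])
    have fk: "dsm k' U f" using a Suc dsm_mono by blast
    show "dsm k' U (\<lambda>w. Dir e f w * inverse (f w))"
      using a Suc fk nz by (intro dsm_mult dsm_inverse) auto
    show "Dir e f w * inverse (f w) = Dir e (\<lambda>w. Ln (f w)) w" if "w \<in> U" for w
      using Dir_Ln[of e f w] a Suc that by simp
  qed
  then show ?thesis using a Suc nz by (auto simp: Dir_Ln)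
qed

lemma chol_dsm: "chol U f \<Longrightarrow> dsm k U f"
proof (induction k arbitrary: f)
  case 0 then show ?case by simp
next
  case (Suc k)
  have "dsm k U (Dir e f)" for e
  proof (rule dsm_cong[OF chol_open[OF Suc.prems]])
    show "dsm k U (\<lambda>w. dv f w e)" by (rule Suc.IH[OF chol_dv[OF Suc.prems]])
    show "dv f w e = Dir e f w" if "w \<in> U" for w using chol_ld[OF Suc.prems that] by simp
  qed
  then show ?case using chol_ld[OF Suc.prems] by simp
qed

lemma sm_cong: "sm U f \<Longrightarrow> (\<And>w. w \<in> U \<Longrightarrow> f w = g w) \<Longrightarrow> sm U g"
  unfolding sm_def using dsm_cong by blast
lemma sm_const: "open U \<Longrightarrow> sm U (\<lambda>w. c)" unfolding sm_def using dsm_const by blast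
lemma sm_add: "sm U f \<Longrightarrow> sm U g \<Longrightarrow> sm U (\<lambda>w. f w + g w)" unfolding sm_def using dsm_add by blast
lemma sm_mult: "sm U f \<Longrightarrow> sm U g \<Longrightarrow> sm U (\<lambda>w. f w * g w)" unfolding sm_def using dsm_mult by blast
lemma sm_cnj: "sm U f \<Longrightarrow> sm U (\<lambda>w. cnj (f w))" unfolding sm_def using dsm_cnj by blast
lemma sm_inverse: "sm U f \<Longrightarrow> (\<And>w. w \<in> U \<Longrightarrow> f w \<noteq> 0) \<Longrightarrow> sm U (\<lambda>w. inverse (f w))"
  unfolding sm_def using dsm_inverse by blast
lemma sm_Ln: "sm U f \<Longrightarrow> (\<And>w. w \<in> U \<Longrightarrow> f w \<notin> \<real>\<^sub>\<le>\<^sub>0) \<Longrightarrow> sm U (\<lambda>w. Ln (f w))"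
  unfolding sm_def using dsm_Ln by blast
lemma chol_sm: "chol U f \<Longrightarrow> sm U f" unfolding sm_def using chol_dsm chol_open by blast
lemma sm_Dir: "sm U f \<Longrightarrow> sm U (Dir e f)" unfolding sm_def by (metis dsm.simps(2))
lemma sm_ld: "sm U f \<Longrightarrow> z \<in> U \<Longrightarrow> ld e f z" unfolding sm_def by (metis dsm.simps(2))
lemma sm_open: "sm U f \<Longrightarrow> open U" unfolding sm_def by blast

lemma sm_minus: assumes "sm U f" shows "sm U (\<lambda>w. - f w)"
proof -
  have "sm U (\<lambda>w. (-1) * f w)" by (rule sm_mult[OF sm_const[OF sm_open[OF assms]] assms])
  then show ?thesis by simp
qed
lemma sm_diff: "sm U f \<Longrightarrow> sm U g \<Longrightarrow> sm U (\<lambda>w. f w - g w)"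
  using sm_add[OF _ sm_minus, of U f g] by simp
lemma sm_divide: "sm U f \<Longrightarrow> sm U g \<Longrightarrow> (\<And>w. w \<in> U \<Longrightarrow> g w \<noteq> 0) \<Longrightarrow> sm U (\<lambda>w. f w / g w)"
  using sm_mult[OF _ sm_inverse, of U f g] by (simp add: divide_inverse)

lemma sm_sum: assumes "open U" "finite S" "\<And>i. i \<in> S \<Longrightarrow> sm U (f i)" shows "sm U (\<lambda>w. \<Sum>i\<in>S. f i w)"
  using assms(2,3)
proof (induction S rule: finite_induct)
  case empty then show ?case using sm_const[OF assms(1)] by simp
next
  case (insert x F) then show ?case using sm_add[of U "f x" "\<lambda>w. \<Sum>i\<in>F. f i w"] by simp
qed

lemma sm_prod: assumes "open U" "finite S" "\<And>i. i \<in> S \<Longrightarrow> sm U (f i)" shows "sm U (\<lambda>w. \<Prod>i\<in>S. f i w)"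
  using assms(2,3)
proof (induction S rule: finite_induct)
  case empty then show ?case using sm_const[OF assms(1)] by simp
next
  case (insert x F) then show ?case using sm_mult[of U "f x" "\<lambda>w. \<Prod>i\<in>F. f i w"] by simp
qed


lemma wd_Dir: "wd f i z = (Dir (axis i 1) f z - \<i> * Dir (axis i \<i>) f z) / 2"
  unfolding wd_def dre_def dim_def Dir_def by simp
lemma wdb_Dir: "wdb f i z = (Dir (axis i 1) f z + \<i> * Dir (axis i \<i>) f z) / 2"
  unfolding wdb_def dre_def dim_def Dir_def by simp

lemma sm_wd: assumes a: "sm U f" shows "sm U (wd f i)"
proof -
  have o: "open U" using sm_open[OF a] .
  have 1: "sm U (Dir (axis i 1) f)" by (rule sm_Dir[OF a])
  have 2: "sm U (Dir (axis i \<i>) f)" by (rule sm_Dir[OF a])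
  have 3: "sm U (\<lambda>z. \<i> * Dir (axis i \<i>) f z)" by (rule sm_mult[OF sm_const[OF o] 2])
  have 4: "sm U (\<lambda>z. Dir (axis i 1) f z - \<i> * Dir (axis i \<i>) f z)" by (rule sm_diff[OF 1 3])
  have 5: "sm U (\<lambda>z. (Dir (axis i 1) f z - \<i> * Dir (axis i \<i>) f z) * inverse 2)"
    by (rule sm_mult[OF 4 sm_const[OF o]])
  have "wd f i = (\<lambda>z. (Dir (axis i 1) f z - \<i> * Dir (axis i \<i>) f z) * inverse 2)"
    by (rule ext) (simp only: wd_Dir divide_inverse)
  then show ?thesis using 5 by simp
qed

lemma sm_wdb: assumes a: "sm U f" shows "sm U (wdb f i)"
proof -
  have o: "open U" using sm_open[OF a] .
  have 1: "sm U (Dir (axis i 1) f)" by (rule sm_Dir[OF a])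
  have 2: "sm U (Dir (axis i \<i>) f)" by (rule sm_Dir[OF a])
  have 3: "sm U (\<lambda>z. \<i> * Dir (axis i \<i>) f z)" by (rule sm_mult[OF sm_const[OF o] 2])
  have 4: "sm U (\<lambda>z. Dir (axis i 1) f z + \<i> * Dir (axis i \<i>) f z)" by (rule sm_add[OF 1 3])
  have 5: "sm U (\<lambda>z. (Dir (axis i 1) f z + \<i> * Dir (axis i \<i>) f z) * inverse 2)"
    by (rule sm_mult[OF 4 sm_const[OF o]])
  have "wdb f i = (\<lambda>z. (Dir (axis i 1) f z + \<i> * Dir (axis i \<i>) f z) * inverse 2)"
    by (rule ext) (simp only: wdb_Dir divide_inverse)
  then show ?thesis using 5 by simp
qed

definition LD :: "(complex^'m \<Rightarrow> complex) \<Rightarrow> complex^'m \<Rightarrow> bool" where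
  "LD f z \<longleftrightarrow> (\<forall>e. ld e f z)"

lemma sm_LD: "sm U f \<Longrightarrow> z \<in> U \<Longrightarrow> LD f z" unfolding LD_def using sm_ld by blast

lemma LD_add: "LD f z \<Longrightarrow> LD g z \<Longrightarrow> LD (\<lambda>w. f w + g w) z" unfolding LD_def using Dir_add by blast
lemma LD_mult: "LD f z \<Longrightarrow> LD g z \<Longrightarrow> LD (\<lambda>w. f w * g w) z" unfolding LD_def using Dir_mult by blast
lemma LD_const: "LD (\<lambda>w. c) z" unfolding LD_def using Dir_const by blast
lemma LD_cnj: "LD f z \<Longrightarrow> LD (\<lambda>w. cnj (f w)) z" unfolding LD_def using Dir_cnj by blast

lemma wd_add: assumes "LD f z" "LD g z" shows "wd (\<lambda>w. f w + g w) i z = wd f i z + wd g i z"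
proof -
  have h: "\<And>e. Dir e (\<lambda>w. f w + g w) z = Dir e f z + Dir e g z" using Dir_add assms unfolding LD_def by blast
  show ?thesis unfolding wd_Dir h by (simp add: field_simps)
qed
lemma wdb_add: assumes "LD f z" "LD g z" shows "wdb (\<lambda>w. f w + g w) i z = wdb f i z + wdb g i z"
proof -
  have h: "\<And>e. Dir e (\<lambda>w. f w + g w) z = Dir e f z + Dir e g z" using Dir_add assms unfolding LD_def by blast
  show ?thesis unfolding wdb_Dir h by (simp add: field_simps)
qed
lemma wd_mult: assumes "LD f z" "LD g z" shows "wd (\<lambda>w. f w * g w) i z = wd f i z * g z + f z * wd g i z"
proof -
  have h: "\<And>e. Dir e (\<lambda>w. f w * g w) z = Dir e f z * g z + f z * Dir e g z" using Dir_mult assms unfolding LD_def by blast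
  show ?thesis unfolding wd_Dir h by (simp add: field_simps)
qed
lemma wdb_mult: assumes "LD f z" "LD g z" shows "wdb (\<lambda>w. f w * g w) i z = wdb f i z * g z + f z * wdb g i z"
proof -
  have h: "\<And>e. Dir e (\<lambda>w. f w * g w) z = Dir e f z * g z + f z * Dir e g z" using Dir_mult assms unfolding LD_def by blast
  show ?thesis unfolding wdb_Dir h by (simp add: field_simps)
qed
lemma wd_const: "wd (\<lambda>w. c) i z = 0" unfolding wd_Dir Dir_const[THEN conjunct2] by simp
lemma wdb_const: "wdb (\<lambda>w. c) i z = 0" unfolding wdb_Dir Dir_const[THEN conjunct2] by simp
lemma wd_cnj: assumes "LD f z" shows "wd (\<lambda>w. cnj (f w)) i z = cnj (wdb f i z)"
proof -
  have h: "\<And>e. Dir e (\<lambda>w. cnj (f w)) z = cnj (Dir e f z)" using Dir_cnj assms unfolding LD_def by blast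
  show ?thesis unfolding wd_Dir wdb_Dir h by simp
qed
lemma wdb_cnj: assumes "LD f z" shows "wdb (\<lambda>w. cnj (f w)) i z = cnj (wd f i z)"
proof -
  have h: "\<And>e. Dir e (\<lambda>w. cnj (f w)) z = cnj (Dir e f z)" using Dir_cnj assms unfolding LD_def by blast
  show ?thesis unfolding wd_Dir wdb_Dir h by simp
qed
lemma wd_inverse: assumes "LD f z" "f z \<noteq> 0" shows "wd (\<lambda>w. inverse (f w)) i z = - wd f i z * (inverse (f z) * inverse (f z))"
proof -
  have h: "\<And>e. Dir e (\<lambda>w. inverse (f w)) z = - Dir e f z * (inverse (f z) * inverse (f z))" using Dir_inverse assms unfolding LD_def by blast
  show ?thesis unfolding wd_Dir h using assms(2) nonpos_Reals_zero_I by (auto simp: field_simps)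
qed
lemma wdb_inverse: assumes "LD f z" "f z \<noteq> 0" shows "wdb (\<lambda>w. inverse (f w)) i z = - wdb f i z * (inverse (f z) * inverse (f z))"
proof -
  have h: "\<And>e. Dir e (\<lambda>w. inverse (f w)) z = - Dir e f z * (inverse (f z) * inverse (f z))" using Dir_inverse assms unfolding LD_def by blast
  show ?thesis unfolding wdb_Dir h using assms(2) nonpos_Reals_zero_I by (auto simp: field_simps)
qed
lemma wd_Ln: assumes "LD f z" "f z \<notin> \<real>\<^sub>\<le>\<^sub>0" shows "wd (\<lambda>w. Ln (f w)) i z = wd f i z * inverse (f z)"
proof -
  have h: "\<And>e. Dir e (\<lambda>w. Ln (f w)) z = Dir e f z * inverse (f z)" using Dir_Ln assms unfolding LD_def by blast
  have nz: "f z \<noteq> 0" using assms(2) by auto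
  show ?thesis unfolding wd_Dir h using nz by (simp add: field_simps)
qed
lemma wdb_Ln: assumes "LD f z" "f z \<notin> \<real>\<^sub>\<le>\<^sub>0" shows "wdb (\<lambda>w. Ln (f w)) i z = wdb f i z * inverse (f z)"
proof -
  have h: "\<And>e. Dir e (\<lambda>w. Ln (f w)) z = Dir e f z * inverse (f z)" using Dir_Ln assms unfolding LD_def by blast
  have nz: "f z \<noteq> 0" using assms(2) by auto
  show ?thesis unfolding wdb_Dir h using nz by (simp add: field_simps)
qed
lemma wd_cong: "open U \<Longrightarrow> z \<in> U \<Longrightarrow> (\<And>w. w \<in> U \<Longrightarrow> f w = g w) \<Longrightarrow> wd f i z = wd g i z"
  unfolding wd_Dir using Dir_cong[of U z f g] by simp
lemma wdb_cong: "open U \<Longrightarrow> z \<in> U \<Longrightarrow> (\<And>w. w \<in> U \<Longrightarrow> f w = g w) \<Longrightarrow> wdb f i z = wdb g i z"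
  unfolding wdb_Dir using Dir_cong[of U z f g] by simp

lemma LD_sum: "finite S \<Longrightarrow> (\<And>q. q \<in> S \<Longrightarrow> LD (f q) z) \<Longrightarrow> LD (\<lambda>w. \<Sum>q\<in>S. f q w) z"
  by (induction S rule: finite_induct) (auto intro: LD_add LD_const)

lemma wd_sum: "finite S \<Longrightarrow> (\<And>q. q \<in> S \<Longrightarrow> LD (f q) z) \<Longrightarrow> wd (\<lambda>w. \<Sum>q\<in>S. f q w) i z = (\<Sum>q\<in>S. wd (f q) i z)"
proof (induction S rule: finite_induct)
  case empty then show ?case by (simp add: wd_const)
next
  case (insert x F) then show ?case by (simp add: wd_add LD_sum)
qed

lemma wdb_sum: "finite S \<Longrightarrow> (\<And>q. q \<in> S \<Longrightarrow> LD (f q) z) \<Longrightarrow> wdb (\<lambda>w. \<Sum>q\<in>S. f q w) i z = (\<Sum>q\<in>S. wdb (f q) i z)"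
proof (induction S rule: finite_induct)
  case empty then show ?case by (simp add: wdb_const)
next
  case (insert x F) then show ?case by (simp add: wdb_add LD_sum)
qed

lemma has_derivative_ld:
  assumes d: "(f has_derivative L) (at z)"
  shows "ld e f z \<and> Dir e f z = L e"
proof (rule Dir_I)
  have d1: "((\<lambda>t::real. z + t *\<^sub>R e) has_derivative (\<lambda>t. t *\<^sub>R e)) (at 0)"
    by (auto intro!: derivative_eq_intros)
  have "((\<lambda>t::real. f (z + t *\<^sub>R e)) has_derivative (\<lambda>t. L (t *\<^sub>R e))) (at 0)"
    using has_derivative_compose[OF d1, of f L] d by simp
  moreover have "(\<lambda>t. L (t *\<^sub>R e)) = (\<lambda>t. t *\<^sub>R L e)"
    using linear_scale[OF has_derivative_linear[OF d]] by auto
  ultimately show "((\<lambda>t::real. f (z + t *\<^sub>R e)) has_vector_derivative L e) (at 0)"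
    unfolding has_vector_derivative_def by simp
qed

lemma axis_ii: "axis i (\<i>::complex) = \<i> *s axis i 1"
  by (simp add: vec_eq_iff axis_def)

lemma chol_wd: assumes "chol U f" "z \<in> U" shows "wd f i z = dv f z (axis i 1)" "wdb f i z = 0"
proof -
  have a: "Dir e f z = dv f z e" for e using chol_ld[OF assms] by simp
  have b: "dv f z (axis i \<i>) = \<i> * dv f z (axis i 1)" unfolding axis_ii by (rule chol_D(2)[OF assms])
  show "wd f i z = dv f z (axis i 1)" unfolding wd_Dir a b by (simp add: field_simps)
  show "wdb f i z = 0" unfolding wdb_Dir a b by simp
qed

lemma chol_cong: assumes "chol U f" "\<And>w. w \<in> U \<Longrightarrow> f w = g w" shows "chol U g"
  unfolding chol_def
proof (intro conjI ballI)
  show oU: "open U" using chol_open[OF assms(1)] .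
  fix z assume z: "z \<in> U"
  have "(g has_derivative dv f z) (at z)"
    by (rule has_derivative_transform_within_open[OF chol_D(1)[OF assms(1) z] oU z assms(2)])
  then show "\<exists>L. (g has_derivative L) (at z) \<and> (\<forall>c h. L (c *s h) = c * L h)"
    using chol_D(2)[OF assms(1) z] by blast
qed

lemma chol_wd_chol: assumes "chol U f" shows "chol U (wd f i)"
  by (rule chol_cong[OF chol_dv[OF assms, of "axis i 1"]]) (simp add: chol_wd(1)[OF assms])


definition wdbv :: "(complex^'m \<Rightarrow> complex^'d) \<Rightarrow> 'm \<Rightarrow> complex^'m \<Rightarrow> complex^'d" where
  "wdbv f i z = (\<chi> c. wdb (\<lambda>w. f w $ c) i z)"

definition smv :: "(complex^'m) set \<Rightarrow> (complex^'m \<Rightarrow> complex^'d) \<Rightarrow> bool" where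
  "smv U F \<longleftrightarrow> open U \<and> (\<forall>c. sm U (\<lambda>w. F w $ c))"

definition LDV :: "(complex^'m \<Rightarrow> complex^'d) \<Rightarrow> complex^'m \<Rightarrow> bool" where
  "LDV F z \<longleftrightarrow> (\<forall>c. LD (\<lambda>w. F w $ c) z)"

definition CH :: "(complex^'m) set \<Rightarrow> (complex^'m \<Rightarrow> complex^'d) \<Rightarrow> bool" where
  "CH U F \<longleftrightarrow> open U \<and> (\<forall>c. chol U (\<lambda>w. F w $ c))"

lemma smv_LDV: "smv U F \<Longrightarrow> z \<in> U \<Longrightarrow> LDV F z"
  unfolding smv_def LDV_def using sm_LD by blast

lemma smv_sm: "smv U F \<Longrightarrow> sm U (\<lambda>w. F w $ c)" unfolding smv_def by blast
lemma smv_open: "smv U F \<Longrightarrow> open U" unfolding smv_def by blast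

lemma smv_add: "smv U F \<Longrightarrow> smv U G \<Longrightarrow> smv U (\<lambda>w. F w + G w)"
  unfolding smv_def using sm_add by fastforce
lemma smv_diff: "smv U F \<Longrightarrow> smv U G \<Longrightarrow> smv U (\<lambda>w. F w - G w)"
  unfolding smv_def using sm_diff by fastforce
lemma smv_smult: "sm U f \<Longrightarrow> smv U F \<Longrightarrow> smv U (\<lambda>w. f w *s F w)"
  unfolding smv_def using sm_mult by fastforce
lemma smv_vconj: "smv U F \<Longrightarrow> smv U (\<lambda>w. vconj (F w))"
  unfolding smv_def vconj_def using sm_cnj by fastforce
lemma smv_sum: assumes "smv U (F q)" "\<And>q. smv U (F q)" shows "smv U (\<lambda>w. \<Sum>q\<in>(UNIV::'k::finite set). F q w)"
  unfolding smv_def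
proof (intro conjI allI)
  show o: "open U" using assms(1) smv_open by blast
  fix c
  have "sm U (\<lambda>w. \<Sum>q\<in>(UNIV::'k set). F q w $ c)"
    by (rule sm_sum[OF o]) (use assms(2) smv_sm in auto)
  then show "sm U (\<lambda>w. (\<Sum>q\<in>UNIV. F q w) $ c)" by (simp add: sum_component)
qed
lemma smv_wdv: "smv U F \<Longrightarrow> smv U (wdv F i)"
  unfolding smv_def wdv_def using sm_wd by fastforce
lemma smv_wdbv: "smv U F \<Longrightarrow> smv U (wdbv F i)"
  unfolding smv_def wdbv_def using sm_wdb by fastforce

lemma wdv_add: "LDV F z \<Longrightarrow> LDV G z \<Longrightarrow> wdv (\<lambda>w. F w + G w) i z = wdv F i z + wdv G i z"
  unfolding wdv_def LDV_def by (simp add: vec_eq_iff wd_add)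
lemma wdbv_add: "LDV F z \<Longrightarrow> LDV G z \<Longrightarrow> wdbv (\<lambda>w. F w + G w) i z = wdbv F i z + wdbv G i z"
  unfolding wdbv_def LDV_def by (simp add: vec_eq_iff wdb_add)
lemma LDV_add: "LDV F z \<Longrightarrow> LDV G z \<Longrightarrow> LDV (\<lambda>w. F w + G w) z"
  unfolding LDV_def by (simp add: LD_add)
lemma LDV_smult: "LD f z \<Longrightarrow> LDV G z \<Longrightarrow> LDV (\<lambda>w. f w *s G w) z"
  unfolding LDV_def by (simp add: LD_mult)
lemma wdv_smult: "LD f z \<Longrightarrow> LDV G z \<Longrightarrow> wdv (\<lambda>w. f w *s G w) i z = wd f i z *s G z + f z *s wdv G i z"
  unfolding wdv_def LDV_def by (simp add: vec_eq_iff wd_mult)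
lemma wdbv_smult: "LD f z \<Longrightarrow> LDV G z \<Longrightarrow> wdbv (\<lambda>w. f w *s G w) i z = wdb f i z *s G z + f z *s wdbv G i z"
  unfolding wdbv_def LDV_def by (simp add: vec_eq_iff wdb_mult)
lemma wdv_vconj: "LDV F z \<Longrightarrow> wdv (\<lambda>w. vconj (F w)) i z = vconj (wdbv F i z)"
  unfolding wdv_def wdbv_def LDV_def vconj_def by (simp add: vec_eq_iff wd_cnj)
lemma wdbv_vconj: "LDV F z \<Longrightarrow> wdbv (\<lambda>w. vconj (F w)) i z = vconj (wdv F i z)"
  unfolding wdv_def wdbv_def LDV_def vconj_def by (simp add: vec_eq_iff wdb_cnj)
lemma LDV_vconj: "LDV F z \<Longrightarrow> LDV (\<lambda>w. vconj (F w)) z"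
  unfolding LDV_def vconj_def by (simp add: LD_cnj)
lemma wdv_cong: "open U \<Longrightarrow> z \<in> U \<Longrightarrow> (\<And>w. w \<in> U \<Longrightarrow> F w = G w) \<Longrightarrow> wdv F i z = wdv G i z"
  unfolding wdv_def vec_eq_iff by (auto intro!: wd_cong[of U z])
lemma wdbv_cong: "open U \<Longrightarrow> z \<in> U \<Longrightarrow> (\<And>w. w \<in> U \<Longrightarrow> F w = G w) \<Longrightarrow> wdbv F i z = wdbv G i z"
  unfolding wdbv_def vec_eq_iff by (auto intro!: wdb_cong[of U z])
lemma LDV_sum: "(\<And>q. LDV (F q) z) \<Longrightarrow> LDV (\<lambda>w. \<Sum>q\<in>(UNIV::'k::finite set). F q w) z"
  unfolding LDV_def by (simp add: sum_component LD_sum)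
lemma wdv_sum: "(\<And>q. LDV (F q) z) \<Longrightarrow> wdv (\<lambda>w. \<Sum>q\<in>(UNIV::'k::finite set). F q w) i z = (\<Sum>q\<in>UNIV. wdv (F q) i z)"
  unfolding wdv_def LDV_def by (simp add: vec_eq_iff sum_component wd_sum)
lemma wdbv_sum: "(\<And>q. LDV (F q) z) \<Longrightarrow> wdbv (\<lambda>w. \<Sum>q\<in>(UNIV::'k::finite set). F q w) i z = (\<Sum>q\<in>UNIV. wdbv (F q) i z)"
  unfolding wdbv_def LDV_def by (simp add: vec_eq_iff sum_component wdb_sum)

lemma cbil_zero_l: "cbilinear Q \<Longrightarrow> Q 0 y = 0"
  unfolding cbilinear_def by (metis add_0 add_cancel_right_right)
lemma cbil_zero_r: "cbilinear Q \<Longrightarrow> Q x 0 = 0"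
  unfolding cbilinear_def by (metis add_0 add_cancel_right_right)
lemma cbil_add_l: "cbilinear Q \<Longrightarrow> Q (x + y) z = Q x z + Q y z" unfolding cbilinear_def by blast
lemma cbil_add_r: "cbilinear Q \<Longrightarrow> Q x (y + z) = Q x y + Q x z" unfolding cbilinear_def by blast
lemma cbil_smult_l: "cbilinear Q \<Longrightarrow> Q (c *s x) y = c * Q x y" unfolding cbilinear_def by blast
lemma cbil_smult_r: "cbilinear Q \<Longrightarrow> Q x (c *s y) = c * Q x y" unfolding cbilinear_def by blast
lemma cbil_minus_l: "cbilinear Q \<Longrightarrow> Q (- x) y = - Q x y"
  using cbil_smult_l[of Q "-1" x y] by simp
lemma cbil_minus_r: "cbilinear Q \<Longrightarrow> Q x (- y) = - Q x y"
  using cbil_smult_r[of Q x "-1" y] by simp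
lemma cbil_diff_l: "cbilinear Q \<Longrightarrow> Q (x - y) z = Q x z - Q y z"
  using cbil_add_l[of Q x "-y" z] cbil_minus_l[of Q y z] by simp
lemma cbil_diff_r: "cbilinear Q \<Longrightarrow> Q x (y - z) = Q x y - Q x z"
  using cbil_add_r[of Q x y "-z"] cbil_minus_r[of Q x z] by simp
lemma cbil_sum_l: assumes "cbilinear Q" shows "Q (\<Sum>a\<in>S. u a) y = (\<Sum>a\<in>S. Q (u a) y)"
proof (induction S rule: infinite_finite_induct)
  case (infinite A) then show ?case using cbil_zero_l[OF assms] by simp
next
  case empty then show ?case using cbil_zero_l[OF assms] by simp
next
  case (insert x F) then show ?case using cbil_add_l[OF assms] by simp
qed
lemma cbil_sum_r: assumes "cbilinear Q" shows "Q x (\<Sum>a\<in>S. u a) = (\<Sum>a\<in>S. Q x (u a))"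
proof (induction S rule: infinite_finite_induct)
  case (infinite A) then show ?case using cbil_zero_r[OF assms] by simp
next
  case empty then show ?case using cbil_zero_r[OF assms] by simp
next
  case (insert x F) then show ?case using cbil_add_r[OF assms] by simp
qed

lemma Q_expand: assumes cb: "cbilinear Q"
  shows "Q x y = (\<Sum>a\<in>UNIV. \<Sum>b\<in>UNIV. x$a * y$b * Q (axis a 1) (axis b 1))"
proof -
  have "Q x y = Q (\<Sum>a\<in>UNIV. x$a *s axis a 1) (\<Sum>b\<in>UNIV. y$b *s axis b 1)"
    by (simp add: basis_expansion)
  also have "\<dots> = (\<Sum>a\<in>UNIV. \<Sum>b\<in>UNIV. x$a * (y$b * Q (axis a 1) (axis b 1)))"
    by (simp add: cbil_sum_l[OF cb] cbil_sum_r[OF cb] cbil_smult_l[OF cb] cbil_smult_r[OF cb] sum_distrib_left mult.left_commute) (rule sum.swap)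
  finally show ?thesis by (simp add: mult.assoc)
qed

lemma wd_Q:
  assumes cb: "cbilinear Q" and F: "LDV F z" and G: "LDV G z"
  shows "wd (\<lambda>w. Q (F w) (G w)) i z = Q (wdv F i z) (G z) + Q (F z) (wdv G i z)"
proof -
  have Fa: "LD (\<lambda>w. F w $ a) z" for a using F unfolding LDV_def by blast
  have Gb: "LD (\<lambda>w. G w $ b) z" for b using G unfolding LDV_def by blast
  have LDab: "LD (\<lambda>w. F w $ a * G w $ b * Q (axis a 1) (axis b 1)) z" for a b
    by (intro LD_mult LD_const Fa Gb)
  have LDa: "LD (\<lambda>w. \<Sum>b\<in>UNIV. F w $ a * G w $ b * Q (axis a 1) (axis b 1)) z" for a
    by (intro LD_sum LDab) auto
  have "wd (\<lambda>w. Q (F w) (G w)) i z = wd (\<lambda>w. \<Sum>a\<in>UNIV. \<Sum>b\<in>UNIV. F w$a * G w$b * Q (axis a 1) (axis b 1)) i z"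
    by (rule arg_cong[where f="\<lambda>h. wd h i z"], rule ext, rule Q_expand[OF cb])
  also have "\<dots> = (\<Sum>a\<in>UNIV. \<Sum>b\<in>UNIV. wd (\<lambda>w. F w$a * G w$b * Q (axis a 1) (axis b 1)) i z)"
    by (simp add: wd_sum LDa LDab)
  also have "\<dots> = (\<Sum>a\<in>UNIV. \<Sum>b\<in>UNIV. (wd (\<lambda>w. F w$a) i z * G z$b + F z$a * wd (\<lambda>w. G w$b) i z) * Q (axis a 1) (axis b 1))"
    by (simp add: wd_mult LD_mult Fa Gb LD_const wd_const)
  also have "\<dots> = Q (wdv F i z) (G z) + Q (F z) (wdv G i z)"
    by (simp only: Q_expand[OF cb, of "wdv F i z" "G z"] Q_expand[OF cb, of "F z" "wdv G i z"])
       (simp add: wdv_def sum.distrib[symmetric] distrib_right)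
  finally show ?thesis .
qed

lemma wdb_Q:
  assumes cb: "cbilinear Q" and F: "LDV F z" and G: "LDV G z"
  shows "wdb (\<lambda>w. Q (F w) (G w)) i z = Q (wdbv F i z) (G z) + Q (F z) (wdbv G i z)"
proof -
  have Fa: "LD (\<lambda>w. F w $ a) z" for a using F unfolding LDV_def by blast
  have Gb: "LD (\<lambda>w. G w $ b) z" for b using G unfolding LDV_def by blast
  have LDab: "LD (\<lambda>w. F w $ a * G w $ b * Q (axis a 1) (axis b 1)) z" for a b
    by (intro LD_mult LD_const Fa Gb)
  have LDa: "LD (\<lambda>w. \<Sum>b\<in>UNIV. F w $ a * G w $ b * Q (axis a 1) (axis b 1)) z" for a
    by (intro LD_sum LDab) auto
  have "wdb (\<lambda>w. Q (F w) (G w)) i z = wdb (\<lambda>w. \<Sum>a\<in>UNIV. \<Sum>b\<in>UNIV. F w$a * G w$b * Q (axis a 1) (axis b 1)) i z"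
    by (rule arg_cong[where f="\<lambda>h. wdb h i z"], rule ext, rule Q_expand[OF cb])
  also have "\<dots> = (\<Sum>a\<in>UNIV. \<Sum>b\<in>UNIV. wdb (\<lambda>w. F w$a * G w$b * Q (axis a 1) (axis b 1)) i z)"
    by (simp add: wdb_sum LDa LDab)
  also have "\<dots> = (\<Sum>a\<in>UNIV. \<Sum>b\<in>UNIV. (wdb (\<lambda>w. F w$a) i z * G z$b + F z$a * wdb (\<lambda>w. G w$b) i z) * Q (axis a 1) (axis b 1))"
    by (simp add: wdb_mult LD_mult Fa Gb LD_const wdb_const)
  also have "\<dots> = Q (wdbv F i z) (G z) + Q (F z) (wdbv G i z)"
    by (simp only: Q_expand[OF cb, of "wdbv F i z" "G z"] Q_expand[OF cb, of "F z" "wdbv G i z"])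
       (simp add: wdbv_def sum.distrib[symmetric] distrib_right)
  finally show ?thesis .
qed

lemma sm_Q:
  assumes cb: "cbilinear Q" and F: "smv U F" and G: "smv U G"
  shows "sm U (\<lambda>w. Q (F w) (G w))"
proof -
  have o: "open U" using F smv_open by blast
  have "sm U (\<lambda>w. \<Sum>a\<in>UNIV. \<Sum>b\<in>UNIV. F w$a * G w$b * Q (axis a 1) (axis b 1))"
    by (intro sm_sum sm_mult sm_const o smv_sm[OF F] smv_sm[OF G]) auto
  moreover have "(\<lambda>w. Q (F w) (G w)) = (\<lambda>w. \<Sum>a\<in>UNIV. \<Sum>b\<in>UNIV. F w$a * G w$b * Q (axis a 1) (axis b 1))"
    by (rule ext, rule Q_expand[OF cb])
  ultimately show ?thesis by simp
qed

lemma LD_Q: assumes cb: "cbilinear Q" and F: "LDV F z" and G: "LDV G z" shows "LD (\<lambda>w. Q (F w) (G w)) z"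
proof -
  have "LD (\<lambda>w. \<Sum>a\<in>UNIV. \<Sum>b\<in>UNIV. F w$a * G w$b * Q (axis a 1) (axis b 1)) z"
    using F G unfolding LDV_def by (intro LD_sum LD_mult LD_const) auto
  moreover have "(\<lambda>w. Q (F w) (G w)) = (\<lambda>w. \<Sum>a\<in>UNIV. \<Sum>b\<in>UNIV. F w$a * G w$b * Q (axis a 1) (axis b 1))"
    by (rule ext, rule Q_expand[OF cb])
  ultimately show ?thesis by simp
qed

lemma CH_comp: "CH U F \<Longrightarrow> chol U (\<lambda>w. F w $ c)" unfolding CH_def by blast

lemma CH_smv: "CH U F \<Longrightarrow> smv U F"
  unfolding CH_def smv_def using chol_sm by blast

lemma CH_wdbv: assumes ch: "CH U F" and z: "z \<in> U" shows "wdbv F i z = 0"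
  by (simp add: vec_eq_iff wdbv_def chol_wd(2)[OF CH_comp[OF ch] z])

lemma CH_wdv: assumes "CH U F" shows "CH U (wdv F i)"
  unfolding CH_def wdv_def using assms unfolding CH_def by (simp add: chol_wd_chol)

lemma CH_holo: assumes ch: "CH U F" shows "holo U F"
  unfolding holo_def
proof (intro conjI ballI allI)
  show "open U" using ch unfolding CH_def by blast
  fix z assume z: "z \<in> U"
  have "((\<lambda>w. \<Sum>c\<in>UNIV. F w $ c *s axis c 1) has_derivative
         (\<lambda>h. \<Sum>c\<in>UNIV. dv (\<lambda>w. F w $ c) z h *s axis c 1)) (at z)"
    by (intro has_derivative_sum bounded_linear.has_derivative[OF bl_smult] chol_D(1)[OF CH_comp[OF ch] z])
  then have "(F has_derivative (\<lambda>h. \<Sum>c\<in>UNIV. dv (\<lambda>w. F w $ c) z h *s axis c 1)) (at z)"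
    by (simp add: basis_expansion)
  then show "F differentiable at z" unfolding differentiable_def by blast
  fix i c
  show "wdb (\<lambda>w. F w $ c) i z = 0" by (rule chol_wd(2)[OF CH_comp[OF ch] z])
qed

lemma re_im_scaleR: "Re z *\<^sub>R (1::complex) + Im z *\<^sub>R \<i> = z"
  by (simp add: complex_eq_iff)

lemma decomp_re_im: "h = (\<Sum>i\<in>UNIV. Re (h$i) *\<^sub>R axis i (1::complex) + Im (h$i) *\<^sub>R axis i \<i>)"
proof -
  have c: "(Re (h$i) *\<^sub>R axis i (1::complex) + Im (h$i) *\<^sub>R axis i \<i>) $ j = (if i = j then h $ i else 0)" for i j
  proof (cases "i = j")
    case True then show ?thesis by (simp add: axis_def re_im_scaleR)
  next
    case False then show ?thesis by (simp add: axis_def)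
  qed
  have "h $ j = (\<Sum>i\<in>UNIV. (Re (h$i) *\<^sub>R axis i (1::complex) + Im (h$i) *\<^sub>R axis i \<i>) $ j)" for j
    unfolding c by simp
  then show ?thesis unfolding vec_eq_iff sum_component by blast
qed

lemma holo_CH: assumes h: "holo U F" shows "CH U F"
  unfolding CH_def chol_def
proof (intro conjI allI ballI)
  show o: "open U" using h unfolding holo_def by blast
  fix c z assume z: "z \<in> U"
  obtain L where L: "(F has_derivative L) (at z)" using h z unfolding holo_def differentiable_def by blast
  define Lc where "Lc = (\<lambda>h. L h $ c)"
  have dc: "((\<lambda>w. F w $ c) has_derivative Lc) (at z)"
    unfolding Lc_def by (rule bounded_linear.has_derivative[OF bounded_linear_vec_nth L])
  have lin: "linear Lc" using has_derivative_linear[OF dc] .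
  have cr: "Lc (axis i \<i>) = \<i> * Lc (axis i 1)" for i
  proof -
    have "wdb (\<lambda>w. F w $ c) i z = 0" using h z unfolding holo_def by blast
    then have "Lc (axis i 1) + \<i> * Lc (axis i \<i>) = 0"
      unfolding wdb_Dir using has_derivative_ld[OF dc] by simp
    then have "\<i> * (Lc (axis i 1) + \<i> * Lc (axis i \<i>)) = 0" by simp
    then show ?thesis by (simp add: algebra_simps)
  qed
  have rep: "Lc h = (\<Sum>i\<in>UNIV. h$i * Lc (axis i 1))" for h
  proof -
    have "Lc h = Lc (\<Sum>i\<in>UNIV. Re (h$i) *\<^sub>R axis i (1::complex) + Im (h$i) *\<^sub>R axis i \<i>)"
      by (rule arg_cong[where f=Lc], rule decomp_re_im)
    also have "\<dots> = (\<Sum>i\<in>UNIV. Re (h$i) *\<^sub>R Lc (axis i 1) + Im (h$i) *\<^sub>R Lc (axis i \<i>))"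
      by (simp add: linear_sum[OF lin] linear_add[OF lin] linear_scale[OF lin] o_def)
    also have "\<dots> = (\<Sum>i\<in>UNIV. h$i * Lc (axis i 1))"
    proof (intro sum.cong refl)
      fix i
      show "Re (h$i) *\<^sub>R Lc (axis i 1) + Im (h$i) *\<^sub>R Lc (axis i \<i>) = h$i * Lc (axis i 1)"
        unfolding cr scaleR_conv_of_real
        by (subst (3) complex_eq) (simp add: algebra_simps)
    qed
    finally show ?thesis .
  qed
  have "Lc (a *s h) = a * Lc h" for a h
    by (simp only: rep[of "a *s h"] rep[of h]) (simp add: sum_distrib_left mult.assoc)
  then show "\<exists>L. ((\<lambda>w. F w $ c) has_derivative L) (at z) \<and> (\<forall>c h. L (c *s h) = c * L h)"
    using dc by blast
qed (use h in \<open>auto simp: holo_def\<close>)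


lemma sm_det: fixes N :: "complex^'m \<Rightarrow> complex^'k^'k" assumes o: "open U" and N: "\<And>a b. sm U (\<lambda>w. ((N w) $ a) $ b)"
  shows "sm U (\<lambda>w. det (N w))"
  unfolding det_def
  by (intro sm_sum sm_mult sm_const sm_prod o N finite_permutations) auto

lemma sum_delta_mult: "(\<Sum>q\<in>(UNIV::'k::finite set). f q * (if l = q then (1::'a::semiring_1) else 0)) = f l"
proof -
  have "(\<Sum>q\<in>(UNIV::'k set). f q * (if l = q then (1::'a) else 0)) = (\<Sum>q\<in>UNIV. if l = q then f q else 0)"
    by (rule sum.cong) auto
  also have "\<dots> = f l" by (simp add: sum.delta)
  finally show ?thesis .
qed
lemma sum_delta_mult2: "(\<Sum>q\<in>(UNIV::'k::finite set). f q * (if q = l then (1::'a::semiring_1) else 0)) = f l"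
proof -
  have "(\<Sum>q\<in>(UNIV::'k set). f q * (if q = l then (1::'a) else 0)) = (\<Sum>q\<in>UNIV. if q = l then f q else 0)"
    by (rule sum.cong) auto
  also have "\<dots> = f l" by (simp add: sum.delta')
  finally show ?thesis .
qed

lemma vconj_add: "vconj (x + y) = vconj x + vconj y" by (simp add: vconj_def vec_eq_iff)
lemma vconj_diff: "vconj (x - y) = vconj x - vconj y" by (simp add: vconj_def vec_eq_iff)
lemma vconj_smult: "vconj (c *s x) = cnj c *s vconj x" by (simp add: vconj_def vec_eq_iff)
lemma vconj_zero: "vconj 0 = 0" by (simp add: vconj_def vec_eq_iff)
lemma vconj_vconj: "vconj (vconj x) = x" by (simp add: vconj_def vec_eq_iff)
lemma vconj_sum: "vconj (\<Sum>q\<in>S. f q) = (\<Sum>q\<in>S. vconj (f q))"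
  by (induction S rule: infinite_finite_induct) (auto simp: vconj_zero vconj_add)

context
  fixes n :: nat and U :: "(complex^'m) set"
    and Q :: "complex^'d \<Rightarrow> complex^'d \<Rightarrow> complex"
    and Hd :: "complex^'m \<Rightarrow> nat \<Rightarrow> (complex^'d) set"
    and \<Omega> :: "complex^'m \<Rightarrow> complex^'d"
  assumes CY: "CY_VHS n U Q Hd \<Omega>" and n3: "3 \<le> n"
begin

lemmas CY' = CY[unfolded CY_VHS_def]
lemma oU: "open U" by (rule CY'[THEN conjunct1])
lemma cb: "cbilinear Q" by (rule CY'[THEN conjunct2, THEN conjunct1])
lemma holoU: "holo U \<Omega>"
  by (rule CY'[THEN conjunct2, THEN conjunct2, THEN conjunct2, THEN conjunct2, THEN conjunct2, THEN conjunct1])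
lemma transv0: "\<forall>V s p. V \<subseteq> U \<longrightarrow> holo V s \<longrightarrow> 1 \<le> p \<longrightarrow> p \<le> n \<longrightarrow>
        (\<forall>w\<in>V. s w \<in> Fil Hd n w p) \<longrightarrow>
        (\<forall>w\<in>V. \<forall>i. wdv s i w \<in> Fil Hd n w (p - 1))"
  by (rule CY'[THEN conjunct2, THEN conjunct2, THEN conjunct2, THEN conjunct2, THEN conjunct2, THEN conjunct2])
lemma transv: "V \<subseteq> U \<Longrightarrow> holo V s \<Longrightarrow> 1 \<le> p \<Longrightarrow> p \<le> n \<Longrightarrow> (\<forall>w\<in>V. s w \<in> Fil Hd n w p) \<Longrightarrow>
   w \<in> V \<Longrightarrow> wdv s i w \<in> Fil Hd n w (p - 1)"
  using transv0 by blast
lemma CYz0: "\<forall>z\<in>U.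
        (\<forall>p\<le>n. csubspace (Hd z p)) \<and>
        (\<forall>p. n < p \<longrightarrow> Hd z p = {0}) \<and>
        (\<forall>v. \<exists>!f. (\<forall>p. f p \<in> Hd z p) \<and> v = (\<Sum>p\<le>n. f p)) \<and>
        (\<forall>p\<le>n. vconj ` Hd z p = Hd z (n - p)) \<and>
        (\<forall>p\<le>n. \<forall>r\<le>n. p + r \<noteq> n \<longrightarrow> (\<forall>x\<in>Hd z p. \<forall>y\<in>Hd z r. Q x y = 0)) \<and>
        (\<forall>p\<le>n. \<forall>x\<in>Hd z p. x \<noteq> 0 \<longrightarrow>
            Im (\<i>^p * (-\<i>)^(n-p) * Q x (vconj x)) = 0 \<and>
            Re (\<i>^p * (-\<i>)^(n-p) * Q x (vconj x)) > 0) \<and>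
        \<Omega> z \<noteq> 0 \<and> \<Omega> z \<in> Hd z n \<and> (\<forall>x\<in>Hd z n. \<exists>c. x = c *s \<Omega> z) \<and>
        (\<forall>v\<in>Hd z (n - 1). \<exists>!c::'m \<Rightarrow> complex. v - (\<Sum>i\<in>UNIV. c i *s wdv \<Omega> i z) \<in> Hd z n)"
  by (rule CY'[THEN conjunct2, THEN conjunct2, THEN conjunct2, THEN conjunct2, THEN conjunct1])
lemmas CYz = bspec[OF CYz0]

lemma Hsub: "z \<in> U \<Longrightarrow> p \<le> n \<Longrightarrow> csubspace (Hd z p)"
  using CYz[THEN conjunct1] by blast
lemma Hbig: "z \<in> U \<Longrightarrow> n < p \<Longrightarrow> Hd z p = {0}"
  using CYz[THEN conjunct2, THEN conjunct1] by blast
lemma Hdec: "z \<in> U \<Longrightarrow> \<exists>!f. (\<forall>p. f p \<in> Hd z p) \<and> v = (\<Sum>p\<le>n. f p)"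
  using CYz[THEN conjunct2, THEN conjunct2, THEN conjunct1] by blast
lemma Hconj: "z \<in> U \<Longrightarrow> p \<le> n \<Longrightarrow> vconj ` Hd z p = Hd z (n - p)"
  using CYz[THEN conjunct2, THEN conjunct2, THEN conjunct2, THEN conjunct1] by blast
lemma Horth: "z \<in> U \<Longrightarrow> p \<le> n \<Longrightarrow> r \<le> n \<Longrightarrow> p + r \<noteq> n \<Longrightarrow> x \<in> Hd z p \<Longrightarrow> y \<in> Hd z r \<Longrightarrow> Q x y = 0"
  using CYz[THEN conjunct2, THEN conjunct2, THEN conjunct2, THEN conjunct2, THEN conjunct1] by blast
lemma Hpos: "z \<in> U \<Longrightarrow> p \<le> n \<Longrightarrow> x \<in> Hd z p \<Longrightarrow> x \<noteq> 0 \<Longrightarrow>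
    Im (\<i>^p * (-\<i>)^(n-p) * Q x (vconj x)) = 0 \<and> Re (\<i>^p * (-\<i>)^(n-p) * Q x (vconj x)) > 0"
  using CYz[THEN conjunct2, THEN conjunct2, THEN conjunct2, THEN conjunct2, THEN conjunct2, THEN conjunct1] by blast
lemma Om_nz: "z \<in> U \<Longrightarrow> \<Omega> z \<noteq> 0"
  using CYz[THEN conjunct2, THEN conjunct2, THEN conjunct2, THEN conjunct2, THEN conjunct2, THEN conjunct2, THEN conjunct1] by blast
lemma Om_in: "z \<in> U \<Longrightarrow> \<Omega> z \<in> Hd z n"
  using CYz[THEN conjunct2, THEN conjunct2, THEN conjunct2, THEN conjunct2, THEN conjunct2, THEN conjunct2, THEN conjunct2, THEN conjunct1] by blast
lemma Om_span: "z \<in> U \<Longrightarrow> x \<in> Hd z n \<Longrightarrow> \<exists>c. x = c *s \<Omega> z"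
  using CYz[THEN conjunct2, THEN conjunct2, THEN conjunct2, THEN conjunct2, THEN conjunct2, THEN conjunct2, THEN conjunct2, THEN conjunct2, THEN conjunct1] by blast
lemma KS: "z \<in> U \<Longrightarrow> v \<in> Hd z (n - 1) \<Longrightarrow> \<exists>!c::'m \<Rightarrow> complex. v - (\<Sum>i\<in>UNIV. c i *s wdv \<Omega> i z) \<in> Hd z n"
  using CYz[THEN conjunct2, THEN conjunct2, THEN conjunct2, THEN conjunct2, THEN conjunct2, THEN conjunct2, THEN conjunct2, THEN conjunct2, THEN conjunct2] by blast

lemma H0: "z \<in> U \<Longrightarrow> 0 \<in> Hd z p"
  by (cases "p \<le> n") (auto simp: Hbig csubspace_def dest: Hsub)
lemma Hadd: "z \<in> U \<Longrightarrow> x \<in> Hd z p \<Longrightarrow> y \<in> Hd z p \<Longrightarrow> x + y \<in> Hd z p"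
  by (cases "p \<le> n") (auto simp: Hbig csubspace_def dest: Hsub)
lemma Hsmult: "z \<in> U \<Longrightarrow> x \<in> Hd z p \<Longrightarrow> c *s x \<in> Hd z p"
  by (cases "p \<le> n") (auto simp: Hbig csubspace_def dest: Hsub)
lemma Hneg: "z \<in> U \<Longrightarrow> x \<in> Hd z p \<Longrightarrow> - x \<in> Hd z p"
  using Hsmult[of z x p "-1"] by simp
lemma Hdiff: "z \<in> U \<Longrightarrow> x \<in> Hd z p \<Longrightarrow> y \<in> Hd z p \<Longrightarrow> x - y \<in> Hd z p"
  using Hadd[of z x p "- y"] Hneg[of z y p] by simp
lemma Hsum: "z \<in> U \<Longrightarrow> (\<And>q. q \<in> S \<Longrightarrow> f q \<in> Hd z p) \<Longrightarrow> (\<Sum>q\<in>S. f q) \<in> Hd z p"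
  by (induction S rule: infinite_finite_induct) (auto intro: H0 Hadd)

definition comp :: "complex^'m \<Rightarrow> complex^'d \<Rightarrow> nat \<Rightarrow> complex^'d" where
  "comp z v = (THE f. (\<forall>p. f p \<in> Hd z p) \<and> v = (\<Sum>p\<le>n. f p))"

lemma comp_spec: assumes "z \<in> U" shows "(\<forall>p. comp z v p \<in> Hd z p) \<and> v = (\<Sum>p\<le>n. comp z v p)"
  unfolding comp_def using theI'[OF Hdec[OF assms, of v]] .

lemma comp_in: "z \<in> U \<Longrightarrow> comp z v p \<in> Hd z p" using comp_spec by blast
lemma comp_sum: "z \<in> U \<Longrightarrow> v = (\<Sum>p\<le>n. comp z v p)" using comp_spec by blast

lemma comp_eq: assumes "z \<in> U" "\<And>p. f p \<in> Hd z p" "v = (\<Sum>p\<le>n. f p)" shows "comp z v = f"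
  using Hdec[OF assms(1), of v] comp_spec[OF assms(1), of v] assms(2,3) by blast

lemma comp_single: assumes z: "z \<in> U" and r: "r \<le> n" and x: "x \<in> Hd z r"
  shows "comp z x = (\<lambda>p. if p = r then x else 0)"
proof (rule comp_eq[OF z])
  show "(if p = r then x else 0) \<in> Hd z p" for p using x H0[OF z] by auto
  show "x = (\<Sum>p\<le>n. if p = r then x else 0)" using r by (simp add: sum.delta)
qed

lemma Hd_inter: assumes z: "z \<in> U" and "p \<le> n" "r \<le> n" "p \<noteq> r" "x \<in> Hd z p" "x \<in> Hd z r"
  shows "x = 0"
proof -
  have "comp z x p = x" using comp_single[OF z assms(2,5)] by simp
  moreover have "comp z x p = 0" using comp_single[OF z assms(3,6)] assms(4) by simp
  ultimately show ?thesis by simp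
qed

lemma comp_add: assumes z: "z \<in> U" shows "comp z (v + w) = (\<lambda>p. comp z v p + comp z w p)"
  by (rule comp_eq[OF z]) (auto intro: Hadd[OF z] comp_in[OF z] simp: sum.distrib comp_sum[OF z, symmetric])

lemma comp_smult: assumes z: "z \<in> U" shows "comp z (c *s v) = (\<lambda>p. c *s comp z v p)"
proof (rule comp_eq[OF z])
  show "c *s comp z v p \<in> Hd z p" for p by (rule Hsmult[OF z comp_in[OF z]])
  have "c *s v = c *s (\<Sum>p\<le>n. comp z v p)" using comp_sum[OF z, of v] by simp
  also have "\<dots> = (\<Sum>p\<le>n. c *s comp z v p)" by (simp add: vec_eq_iff sum_component sum_distrib_left)
  finally show "c *s v = (\<Sum>p\<le>n. c *s comp z v p)" .
qed

lemma comp_zero: assumes z: "z \<in> U" shows "comp z 0 = (\<lambda>p. 0)"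
  by (rule comp_eq[OF z]) (auto intro: H0[OF z])

lemma comp_diff: assumes z: "z \<in> U" shows "comp z (v - w) p = comp z v p - comp z w p"
  using comp_add[OF z, of v "(-1) *s w"] comp_smult[OF z, of "-1" w]
  by (simp add: vec_eq_iff)

lemma comp_sumv: assumes z: "z \<in> U" shows "comp z (\<Sum>q\<in>S. f q) p = (\<Sum>q\<in>S. comp z (f q) p)"
  by (induction S rule: infinite_finite_induct) (auto simp: comp_zero[OF z] comp_add[OF z])

lemma Fil_iff: assumes z: "z \<in> U" shows "v \<in> Fil Hd n z p \<longleftrightarrow> (\<forall>r<p. comp z v r = 0)"
proof
  assume "v \<in> Fil Hd n z p"
  then obtain f where f: "\<forall>r. f r \<in> Hd z r" "v = (\<Sum>r\<in>{p..n}. f r)" unfolding Fil_def by blast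
  define g where "g = (\<lambda>r. if p \<le> r then f r else 0)"
  have "comp z v = g"
  proof (rule comp_eq[OF z])
    show "g r \<in> Hd z r" for r using f(1) H0[OF z] by (simp add: g_def)
    have "(\<Sum>r\<le>n. g r) = (\<Sum>r\<in>{p..n}. f r)"
      unfolding g_def by (rule sum.mono_neutral_cong_right) auto
    then show "v = (\<Sum>r\<le>n. g r)" using f(2) by simp
  qed
  then show "\<forall>r<p. comp z v r = 0" by (simp add: g_def)
next
  assume a: "\<forall>r<p. comp z v r = 0"
  have "v = (\<Sum>r\<le>n. comp z v r)" by (rule comp_sum[OF z])
  also have "\<dots> = (\<Sum>r\<in>{p..n}. comp z v r)"
    by (rule sum.mono_neutral_cong_right) (use a in auto)
  finally show "v \<in> Fil Hd n z p" unfolding Fil_def using comp_in[OF z] by blast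
qed

lemma Fil_add: "z \<in> U \<Longrightarrow> x \<in> Fil Hd n z p \<Longrightarrow> y \<in> Fil Hd n z p \<Longrightarrow> x + y \<in> Fil Hd n z p"
  by (simp add: Fil_iff comp_add)
lemma Fil_smult: "z \<in> U \<Longrightarrow> x \<in> Fil Hd n z p \<Longrightarrow> c *s x \<in> Fil Hd n z p"
  by (simp add: Fil_iff comp_smult)
lemma Fil_diff: "z \<in> U \<Longrightarrow> x \<in> Fil Hd n z p \<Longrightarrow> y \<in> Fil Hd n z p \<Longrightarrow> x - y \<in> Fil Hd n z p"
  by (simp add: Fil_iff comp_diff)
lemma Fil_sum: "z \<in> U \<Longrightarrow> (\<And>q. q \<in> S \<Longrightarrow> f q \<in> Fil Hd n z p) \<Longrightarrow> (\<Sum>q\<in>S. f q) \<in> Fil Hd n z p"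
  by (simp add: Fil_iff comp_sumv)
lemma Fil_mono: "z \<in> U \<Longrightarrow> q \<le> p \<Longrightarrow> x \<in> Fil Hd n z p \<Longrightarrow> x \<in> Fil Hd n z q"
  by (simp add: Fil_iff)
lemma Hd_Fil: assumes z: "z \<in> U" and "p \<le> n" "x \<in> Hd z p" shows "x \<in> Fil Hd n z p"
  using comp_single[OF z assms(2,3)] by (simp add: Fil_iff[OF z])

lemma vconj_Hd: "z \<in> U \<Longrightarrow> r \<le> n \<Longrightarrow> y \<in> Hd z r \<Longrightarrow> vconj y \<in> Hd z (n - r)"
  using Hconj by blast

lemma Q_comp: assumes z: "z \<in> U" and r: "r \<le> n" and y: "y \<in> Hd z r"
  shows "Q v (vconj y) = Q (comp z v r) (vconj y)"
proof -
  have "Q v (vconj y) = Q (\<Sum>p\<le>n. comp z v p) (vconj y)" using comp_sum[OF z, of v] by simp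
  also have "\<dots> = (\<Sum>p\<le>n. Q (comp z v p) (vconj y))" by (rule cbil_sum_l[OF cb])
  also have "\<dots> = (\<Sum>p\<le>n. if p = r then Q (comp z v r) (vconj y) else 0)"
  proof (rule sum.cong[OF refl])
    fix p assume p: "p \<in> {..n}"
    show "Q (comp z v p) (vconj y) = (if p = r then Q (comp z v r) (vconj y) else 0)"
    proof (cases "p = r")
      case False
      have "p + (n - r) \<noteq> n" using False r p by auto
      then show ?thesis using Horth[OF z _ _ _ comp_in[OF z] vconj_Hd[OF z r y]] False p by auto
    qed simp
  qed
  also have "\<dots> = Q (comp z v r) (vconj y)" using r by (simp add: sum.delta)
  finally show ?thesis .
qed

lemma pos_Q: assumes z: "z \<in> U" and p: "p \<le> n" and x: "x \<in> Hd z p" and q: "Q x (vconj x) = 0"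
  shows "x = 0"
proof (rule ccontr)
  assume "x \<noteq> 0"
  from Hpos[OF z p x this] have "Re (\<i>^p * (-\<i>)^(n-p) * Q x (vconj x)) > 0" by blast
  then show False using q by simp
qed

lemma Q_orth_conj: assumes z: "z \<in> U" and "p \<le> n" "r \<le> n" "p \<noteq> r" "x \<in> Hd z p" "y \<in> Hd z r"
  shows "Q x (vconj y) = 0"
proof -
  have "p + (n - r) \<noteq> n" using assms by auto
  then show ?thesis using Horth[OF z assms(2) _ _ assms(5) vconj_Hd[OF z assms(3,6)]] by auto
qed


abbreviation "P w \<equiv> Q (\<Omega> w) (vconj (\<Omega> w))"
abbreviation "Om_b w \<equiv> vconj (\<Omega> w)"

lemma CH_Om: "CH U \<Omega>" by (rule holo_CH[OF holoU])
lemma CH_A: "CH U (wdv \<Omega> i)" by (rule CH_wdv[OF CH_Om])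
lemma CH_AA: "CH U (wdv (wdv \<Omega> i) j)" by (rule CH_wdv[OF CH_A])
lemma smv_Om: "smv U \<Omega>" by (rule CH_smv[OF CH_Om])
lemma smv_A: "smv U (wdv \<Omega> i)" by (rule CH_smv[OF CH_A])
lemma smv_Omb: "smv U (\<lambda>w. vconj (\<Omega> w))" by (rule smv_vconj[OF smv_Om])
lemma LDV_Om: "w \<in> U \<Longrightarrow> LDV \<Omega> w" by (rule smv_LDV[OF smv_Om])
lemma LDV_A: "w \<in> U \<Longrightarrow> LDV (wdv \<Omega> i) w" by (rule smv_LDV[OF smv_A])
lemma LDV_Omb: "w \<in> U \<Longrightarrow> LDV (\<lambda>w. vconj (\<Omega> w)) w" by (rule smv_LDV[OF smv_Omb])
lemma wdbv_Om: "w \<in> U \<Longrightarrow> wdbv \<Omega> i w = 0" by (rule CH_wdbv[OF CH_Om])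
lemma wdbv_A: "w \<in> U \<Longrightarrow> wdbv (wdv \<Omega> j) i w = 0" by (rule CH_wdbv[OF CH_A])

lemma sm_P: "sm U P" by (rule sm_Q[OF cb smv_Om smv_Omb])
lemma LD_P: "w \<in> U \<Longrightarrow> LD P w" by (rule sm_LD[OF sm_P])

lemma pair_pos: assumes w: "w \<in> U" shows "Im (\<i>^n * P w) = 0" "Re (\<i>^n * P w) > 0"
  using Hpos[OF w le_refl Om_in[OF w] Om_nz[OF w]] by auto

lemma pair_slit: assumes w: "w \<in> U" shows "\<i>^n * P w \<notin> \<real>\<^sub>\<le>\<^sub>0"
proof
  assume "\<i>^n * P w \<in> \<real>\<^sub>\<le>\<^sub>0"
  then obtain r where eq: "\<i>^n * P w = of_real r" and r: "r \<le> 0" by (auto simp: nonpos_Reals_def)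
  have "Re (\<i>^n * P w) = r" using eq by (metis Re_complex_of_real)
  then show False using pair_pos(2)[OF w] r by linarith
qed

lemma P_nz: "w \<in> U \<Longrightarrow> P w \<noteq> 0"
  using pair_pos(2) by fastforce

lemma logN_eq: "logN n Q \<Omega> = (\<lambda>w. Ln (\<i>^n * P w))"
  by (simp add: fun_eq_iff logN_def pairing_def)

lemma sm_logN: "sm U (logN n Q \<Omega>)"
  unfolding logN_eq by (intro sm_Ln sm_mult sm_const oU sm_P pair_slit)

lemma wd_P: assumes w: "w \<in> U" shows "wd P i w = Q (wdv \<Omega> i w) (vconj (\<Omega> w))"
proof -
  have "wd P i w = Q (wdv \<Omega> i w) (vconj (\<Omega> w)) + Q (\<Omega> w) (wdv (\<lambda>w. vconj (\<Omega> w)) i w)"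
    by (rule wd_Q[OF cb LDV_Om[OF w] LDV_Omb[OF w]])
  also have "wdv (\<lambda>w. vconj (\<Omega> w)) i w = 0"
    using wdv_vconj[OF LDV_Om[OF w]] wdbv_Om[OF w] by (simp add: vconj_zero)
  finally show ?thesis by (simp add: cbil_zero_r[OF cb])
qed

lemma wdb_P: assumes w: "w \<in> U" shows "wdb P i w = Q (\<Omega> w) (vconj (wdv \<Omega> i w))"
proof -
  have "wdb P i w = Q (wdbv \<Omega> i w) (vconj (\<Omega> w)) + Q (\<Omega> w) (wdbv (\<lambda>w. vconj (\<Omega> w)) i w)"
    by (rule wdb_Q[OF cb LDV_Om[OF w] LDV_Omb[OF w]])
  also have "wdbv (\<lambda>w. vconj (\<Omega> w)) i w = vconj (wdv \<Omega> i w)"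
    using wdbv_vconj[OF LDV_Om[OF w]] by simp
  finally show ?thesis by (simp add: cbil_zero_l[OF cb] wdbv_Om[OF w])
qed

lemma wd_logN: assumes w: "w \<in> U" shows "wd (logN n Q \<Omega>) i w = wd P i w / P w"
proof -
  have LD1: "LD (\<lambda>w. \<i>^n * P w) w" by (intro LD_mult LD_const LD_P w)
  have "wd (logN n Q \<Omega>) i w = wd (\<lambda>w. \<i>^n * P w) i w * inverse (\<i>^n * P w)"
    unfolding logN_eq by (rule wd_Ln[OF LD1 pair_slit[OF w]])
  also have "wd (\<lambda>w. \<i>^n * P w) i w = \<i>^n * wd P i w"
    by (simp add: wd_mult LD_const LD_P[OF w] wd_const)
  finally show ?thesis using P_nz[OF w] by (simp add: field_simps)
qed

lemma wdb_logN: assumes w: "w \<in> U" shows "wdb (logN n Q \<Omega>) i w = wdb P i w / P w"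
proof -
  have LD1: "LD (\<lambda>w. \<i>^n * P w) w" by (intro LD_mult LD_const LD_P w)
  have "wdb (logN n Q \<Omega>) i w = wdb (\<lambda>w. \<i>^n * P w) i w * inverse (\<i>^n * P w)"
    unfolding logN_eq by (rule wdb_Ln[OF LD1 pair_slit[OF w]])
  also have "wdb (\<lambda>w. \<i>^n * P w) i w = \<i>^n * wdb P i w"
    by (simp add: wdb_mult LD_const LD_P[OF w] wdb_const)
  finally show ?thesis using P_nz[OF w] by (simp add: field_simps)
qed

lemma K_eq: assumes w: "w \<in> U" shows "Kf n Q \<Omega> i w = - Q (wdv \<Omega> i w) (vconj (\<Omega> w)) / P w"
  unfolding Kf_def wd_logN[OF w] wd_P[OF w] by simp

lemma sm_K: "sm U (Kf n Q \<Omega> i)"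
proof -
  have "Kf n Q \<Omega> i = (\<lambda>z. - wd (logN n Q \<Omega>) i z)" by (simp add: fun_eq_iff Kf_def)
  then show ?thesis using sm_minus[OF sm_wd[OF sm_logN]] by simp
qed

lemma D1_eq: "D1 n Q \<Omega> i = (\<lambda>w. wdv \<Omega> i w + Kf n Q \<Omega> i w *s \<Omega> w)"
  by (simp add: fun_eq_iff D1_def)

lemma smv_D1: "smv U (D1 n Q \<Omega> i)"
  unfolding D1_eq by (intro smv_add smv_smult smv_A sm_K smv_Om)

lemma LDV_D1: "w \<in> U \<Longrightarrow> LDV (D1 n Q \<Omega> i) w" by (rule smv_LDV[OF smv_D1])

lemma Q_D1_Omb: assumes w: "w \<in> U" shows "Q (D1 n Q \<Omega> i w) (vconj (\<Omega> w)) = 0"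
  unfolding D1_def using P_nz[OF w]
  by (simp add: cbil_add_l[OF cb] cbil_diff_l[OF cb] cbil_minus_l[OF cb] cbil_smult_l[OF cb] K_eq[OF w])

lemma Om_Fil: "w \<in> U \<Longrightarrow> \<Omega> w \<in> Fil Hd n w n"
  by (rule Hd_Fil[OF _ le_refl Om_in])

lemma A_Fil: "w \<in> U \<Longrightarrow> wdv \<Omega> i w \<in> Fil Hd n w (n - 1)"
  by (rule transv[OF order_refl holoU _ le_refl]) (use n3 Om_Fil in auto)

lemma testn: assumes w: "w \<in> U" and q: "Q v (vconj (\<Omega> w)) = 0" shows "comp w v n = 0"
proof -
  obtain c where c: "comp w v n = c *s \<Omega> w" using Om_span[OF w comp_in[OF w]] by blast
  have "Q v (vconj (\<Omega> w)) = Q (comp w v n) (vconj (\<Omega> w))" by (rule Q_comp[OF w le_refl Om_in[OF w]])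
  then have "c * P w = 0" using q c by (simp add: cbil_smult_l[OF cb])
  then have "c = 0" using P_nz[OF w] by simp
  then show ?thesis using c by simp
qed

lemma vdecomp: assumes w: "w \<in> U" and S: "S \<subseteq> {..n}"
  and z: "\<And>r. r \<le> n \<Longrightarrow> r \<notin> S \<Longrightarrow> comp w v r = 0"
  shows "v = (\<Sum>r\<in>S. comp w v r)"
proof -
  have "v = (\<Sum>r\<le>n. comp w v r)" by (rule comp_sum[OF w])
  also have "\<dots> = (\<Sum>r\<in>S. comp w v r)"
    by (rule sum.mono_neutral_cong_right) (use S z in auto)
  finally show ?thesis .
qed

lemma D1_Hd: assumes w: "w \<in> U" shows "D1 n Q \<Omega> i w \<in> Hd w (n - 1)"
proof -
  have F: "D1 n Q \<Omega> i w \<in> Fil Hd n w (n - 1)"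
    unfolding D1_def using n3
    by (intro Fil_add[OF w] A_Fil[OF w] Fil_smult[OF w] Fil_mono[OF w _ Om_Fil[OF w]]) auto
  have "D1 n Q \<Omega> i w = (\<Sum>r\<in>{n-1}. comp w (D1 n Q \<Omega> i w) r)"
  proof (rule vdecomp[OF w])
    fix r assume r: "r \<le> n" "r \<notin> {n - 1}"
    show "comp w (D1 n Q \<Omega> i w) r = 0"
    proof (cases "r = n")
      case True then show ?thesis using testn[OF w Q_D1_Omb[OF w]] by simp
    next
      case False then have "r < n - 1" using r by auto
      then show ?thesis using F Fil_iff[OF w] by blast
    qed
  qed auto
  then have e: "D1 n Q \<Omega> i w = comp w (D1 n Q \<Omega> i w) (n - 1)" by simp
  show ?thesis by (metis e comp_in[OF w])
qed


lemma sumD1: "(\<Sum>i\<in>UNIV. c i *s D1 n Q \<Omega> i w) =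
   (\<Sum>i\<in>UNIV. c i *s wdv \<Omega> i w) + (\<Sum>i\<in>UNIV. c i * Kf n Q \<Omega> i w) *s \<Omega> w"
  unfolding D1_def by (simp add: vec_eq_iff sum_component algebra_simps sum.distrib sum_distrib_right sum_distrib_left mult.left_commute)

lemma testn1: assumes w: "w \<in> U" and q: "\<And>l. Q v (vconj (D1 n Q \<Omega> l w)) = 0"
  shows "comp w v (n - 1) = 0"
proof -
  define y where "y = comp w v (n - 1)"
  have y: "y \<in> Hd w (n - 1)" using comp_in[OF w] y_def by simp
  obtain c where c: "y - (\<Sum>i\<in>UNIV. c i *s wdv \<Omega> i w) \<in> Hd w n" using KS[OF w y] by blast
  define e where "e = y - (\<Sum>i\<in>UNIV. c i *s D1 n Q \<Omega> i w)"
  have "e = (y - (\<Sum>i\<in>UNIV. c i *s wdv \<Omega> i w)) - (\<Sum>i\<in>UNIV. c i * Kf n Q \<Omega> i w) *s \<Omega> w"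
    unfolding e_def sumD1 by (simp add: algebra_simps)
  then have e1: "e \<in> Hd w n" using Hdiff[OF w c Hsmult[OF w Om_in[OF w]]] by simp
  have e2: "e \<in> Hd w (n - 1)" unfolding e_def
    by (intro Hdiff[OF w y] Hsum[OF w] Hsmult[OF w] D1_Hd[OF w])
  have "e = 0" using Hd_inter[OF w le_refl _ _ e1 e2] n3 by auto
  then have yD: "y = (\<Sum>i\<in>UNIV. c i *s D1 n Q \<Omega> i w)" by (simp add: e_def)
  have vy: "vconj y = (\<Sum>i\<in>UNIV. cnj (c i) *s vconj (D1 n Q \<Omega> i w))"
    using yD by (simp add: vconj_sum vconj_smult)
  have qy: "Q y (vconj (D1 n Q \<Omega> i w)) = 0" for i
    using Q_comp[OF w _ D1_Hd[OF w], of v i] q[of i] n3 by (simp add: y_def)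
  have "Q y (vconj y) = 0"
    unfolding vy by (simp add: cbil_sum_r[OF cb] cbil_smult_r[OF cb] qy)
  then have "y = 0" using pos_Q[OF w _ y] by simp
  then show ?thesis by (simp add: y_def)
qed

lemma smv_vconjD1: "smv U (\<lambda>w. vconj (D1 n Q \<Omega> i w))" by (rule smv_vconj[OF smv_D1])

lemma G_eq: assumes w: "w \<in> U"
  shows "gWP n Q \<Omega> i l w = - Q (D1 n Q \<Omega> i w) (vconj (D1 n Q \<Omega> l w)) / P w"
proof -
  define Bq where "Bq = (\<lambda>w. Q (\<Omega> w) (vconj (wdv \<Omega> l w)))"
  have B: "wdb (logN n Q \<Omega>) l w' = Bq w' * inverse (P w')" if "w' \<in> U" for w'
    using wdb_logN[OF that] wdb_P[OF that] by (simp add: Bq_def divide_inverse)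
  have LDB: "LD Bq w" unfolding Bq_def by (rule LD_Q[OF cb LDV_Om[OF w] LDV_vconj[OF LDV_A[OF w]]])
  have LDiP: "LD (\<lambda>w. inverse (P w)) w" by (rule sm_LD[OF sm_inverse[OF sm_P P_nz] w])
  have wdB: "wd Bq i w = Q (wdv \<Omega> i w) (vconj (wdv \<Omega> l w))"
  proof -
    have "wd Bq i w = Q (wdv \<Omega> i w) (vconj (wdv \<Omega> l w)) + Q (\<Omega> w) (wdv (\<lambda>w. vconj (wdv \<Omega> l w)) i w)"
      unfolding Bq_def by (rule wd_Q[OF cb LDV_Om[OF w] LDV_vconj[OF LDV_A[OF w]]])
    also have "wdv (\<lambda>w. vconj (wdv \<Omega> l w)) i w = 0"
      using wdv_vconj[OF LDV_A[OF w]] wdbv_A[OF w] by (simp add: vconj_zero)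
    finally show ?thesis by (simp add: cbil_zero_r[OF cb])
  qed
  have "gWP n Q \<Omega> i l w = - wd (\<lambda>w. Bq w * inverse (P w)) i w"
    unfolding gWP_def by (simp add: wd_cong[OF oU w B])
  also have "\<dots> = - (wd Bq i w * inverse (P w) + Bq w * (- wd P i w * (inverse (P w) * inverse (P w))))"
    by (simp add: wd_mult[OF LDB LDiP] wd_inverse[OF LD_P[OF w] P_nz[OF w]])
  also have "\<dots> = - Q (D1 n Q \<Omega> i w) (vconj (D1 n Q \<Omega> l w)) / P w"
    unfolding wdB unfolding wd_P[OF w] Bq_def D1_def using P_nz[OF w]
    by (simp add: cbil_add_l[OF cb] cbil_add_r[OF cb] cbil_smult_l[OF cb] cbil_smult_r[OF cb]
        cbil_diff_l[OF cb] cbil_diff_r[OF cb] vconj_diff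
        vconj_add vconj_smult K_eq[OF w] field_simps)
  finally show ?thesis .
qed


abbreviation "Mg w \<equiv> transpose (\<chi> i j. gWP n Q \<Omega> i j w)"

lemma M_inj0: assumes w: "w \<in> U" and x: "Mg w *v x = 0" shows "x = 0"
proof -
  define y where "y = (\<Sum>j\<in>UNIV. x$j *s D1 n Q \<Omega> j w)"
  have ql: "Q y (vconj (D1 n Q \<Omega> l w)) = 0" for l
  proof -
    have "(Mg w *v x) $ l = (\<Sum>j\<in>UNIV. gWP n Q \<Omega> j l w * x$j)"
      by (simp add: matrix_vector_mult_def transpose_def)
    also have "\<dots> = (\<Sum>j\<in>UNIV. - Q (D1 n Q \<Omega> j w) (vconj (D1 n Q \<Omega> l w)) / P w * x$j)"
      by (simp add: G_eq[OF w])
    also have "\<dots> = - Q y (vconj (D1 n Q \<Omega> l w)) / P w"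
      unfolding y_def by (simp add: cbil_sum_l[OF cb] cbil_smult_l[OF cb] sum_divide_distrib mult.commute) (rule sum_negf)
    finally show ?thesis using x P_nz[OF w] by simp
  qed
  have y: "y \<in> Hd w (n - 1)" unfolding y_def by (intro Hsum[OF w] Hsmult[OF w] D1_Hd[OF w])
  have "comp w y (n - 1) = 0" by (rule testn1[OF w ql])
  moreover have "comp w y (n - 1) = y" using comp_single[OF w _ y] by simp
  ultimately have y0: "y = 0" by simp
  have e: "0 - (\<Sum>j\<in>UNIV. x$j *s wdv \<Omega> j w) = (\<Sum>j\<in>UNIV. x$j * Kf n Q \<Omega> j w) *s \<Omega> w"
  proof -
    have s1: "(\<Sum>j\<in>UNIV. x$j *s D1 n Q \<Omega> j w) = 0" using y0 unfolding y_def .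
    have "(\<Sum>j\<in>UNIV. x$j *s wdv \<Omega> j w) + (\<Sum>j\<in>UNIV. x$j * Kf n Q \<Omega> j w) *s \<Omega> w
          = (\<Sum>j\<in>UNIV. x$j *s D1 n Q \<Omega> j w)"
      by (rule sumD1[symmetric])
    then have "(\<Sum>j\<in>UNIV. x$j *s wdv \<Omega> j w) + (\<Sum>j\<in>UNIV. x$j * Kf n Q \<Omega> j w) *s \<Omega> w = 0"
      using s1 by simp
    then show ?thesis by (simp add: add_eq_0_iff)
  qed
  define Pk where "Pk = (\<lambda>c::'m \<Rightarrow> complex. 0 - (\<Sum>i\<in>UNIV. c i *s wdv \<Omega> i w) \<in> Hd w n)"
  have u: "\<exists>!c. Pk c" unfolding Pk_def by (rule KS[OF w H0[OF w]])
  have h1: "Pk (\<lambda>j. x$j)" unfolding Pk_def e by (rule Hsmult[OF w Om_in[OF w]])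
  have h2: "Pk (\<lambda>j. 0)" unfolding Pk_def using H0[OF w] by simp
  have "(\<lambda>j. x$j) = (\<lambda>j. 0)" using u h1 h2 by blast
  then show ?thesis by (simp add: vec_eq_iff fun_eq_iff)
qed

lemma M_det: assumes w: "w \<in> U" shows "det (Mg w) \<noteq> 0"
proof -
  have "inj ((*v) (Mg w))"
  proof (rule injI)
    fix a b assume "Mg w *v a = Mg w *v b"
    then have "Mg w *v (a - b) = 0" by (simp add: matrix_vector_mult_diff_distrib)
    then show "a = b" using M_inj0[OF w, of "a - b"] by simp
  qed
  then show ?thesis using det_nz_iff_inj_gen[OF matrix_vector_mul_linear_gen[of "Mg w"]] by simp
qed

lemma M_inv: assumes w: "w \<in> U"
  shows "Mg w ** matrix_inv (Mg w) = mat 1" "matrix_inv (Mg w) ** Mg w = mat 1"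
proof -
  have "invertible (Mg w)" using M_det[OF w] invertible_det_nz by blast
  then have "\<exists>A'. Mg w ** A' = mat 1 \<and> A' ** Mg w = mat 1" unfolding invertible_def by blast
  from someI_ex[OF this] show "Mg w ** matrix_inv (Mg w) = mat 1" "matrix_inv (Mg w) ** Mg w = mat 1"
    unfolding matrix_inv_def by blast+
qed

lemma Gam_G: assumes w: "w \<in> U"
  shows "(\<Sum>k\<in>UNIV. Gam n Q \<Omega> k i j w * gWP n Q \<Omega> k l w) = wd (gWP n Q \<Omega> i l) j w"
proof -
  define Mi where "Mi = matrix_inv (Mg w)"
  define dG where "dG = (\<lambda>q. wd (gWP n Q \<Omega> i q) j w)"
  have "(\<Sum>k\<in>UNIV. Gam n Q \<Omega> k i j w * gWP n Q \<Omega> k l w) =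
        (\<Sum>k\<in>UNIV. \<Sum>q\<in>UNIV. Mi$k$q * dG q * gWP n Q \<Omega> k l w)"
    by (simp add: Gam_def gInv_def Mi_def dG_def sum_distrib_right)
  also have "\<dots> = (\<Sum>q\<in>UNIV. \<Sum>k\<in>UNIV. Mi$k$q * dG q * gWP n Q \<Omega> k l w)"
    by (rule sum.swap)
  also have "\<dots> = (\<Sum>q\<in>UNIV. dG q * (Mg w ** Mi)$l$q)"
    by (simp add: matrix_matrix_mult_def transpose_def sum_distrib_left mult_ac)
  also have "\<dots> = dG l" using M_inv(1)[OF w] by (simp add: Mi_def mat_def sum_delta_mult)
  finally show ?thesis by (simp add: dG_def)
qed

lemma mv_axis: "(A *v axis q 1) $ k = A $ k $ q"
  by (simp add: matrix_vector_mult_def axis_def sum_delta_mult2)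

lemma gInv_cramer: assumes w: "w \<in> U"
  shows "gInv n Q \<Omega> k q w = det (\<chi> a b. if b = k then axis q 1 $ a else Mg w $ a $ b) / det (Mg w)"
proof -
  have "Mg w *v (matrix_inv (Mg w) *v axis q 1) = axis q 1"
    by (simp add: matrix_vector_mul_assoc M_inv(1)[OF w])
  then have "matrix_inv (Mg w) *v axis q 1 = (\<chi> k. det (\<chi> a b. if b = k then axis q 1 $ a else Mg w $ a $ b) / det (Mg w))"
    using cramer[OF M_det[OF w]] by blast
  then have "(matrix_inv (Mg w) *v axis q 1) $ k = det (\<chi> a b. if b = k then axis q 1 $ a else Mg w $ a $ b) / det (Mg w)"
    by simp
  then show ?thesis by (simp add: gInv_def mv_axis)
qed


lemma sm_gWP: "sm U (gWP n Q \<Omega> i j)"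
proof -
  have "gWP n Q \<Omega> i j = (\<lambda>z. - wd (wdb (logN n Q \<Omega>) j) i z)" by (simp add: fun_eq_iff gWP_def)
  then show ?thesis using sm_minus[OF sm_wd[OF sm_wdb[OF sm_logN]]] by simp
qed

lemma sm_gInv: "sm U (gInv n Q \<Omega> k q)"
proof (rule sm_cong)
  define N where "N = (\<lambda>w. (\<chi> a b. if b = k then axis q 1 $ a else Mg w $ a $ b) :: complex^'m^'m)"
  have Ne: "\<And>a b. sm U (\<lambda>w. ((N w) $ a) $ b)"
  proof -
    fix a b
    show "sm U (\<lambda>w. ((N w) $ a) $ b)"
    proof (cases "b = k")
      case True then show ?thesis by (simp add: N_def sm_const oU)
    next
      case False then show ?thesis by (simp add: N_def transpose_def sm_gWP)
    qed
  qed
  have Me: "\<And>a b. sm U (\<lambda>w. ((Mg w) $ a) $ b)" by (simp add: transpose_def sm_gWP)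
  show "sm U (\<lambda>w. det (N w) / det (Mg w))"
    by (rule sm_divide[OF sm_det[OF oU Ne] sm_det[OF oU Me] M_det])
  show "det (N w) / det (Mg w) = gInv n Q \<Omega> k q w" if "w \<in> U" for w
    using gInv_cramer[OF that] by (simp add: N_def)
qed

lemma sm_Gam: "sm U (Gam n Q \<Omega> k i j)"
proof -
  have "Gam n Q \<Omega> k i j = (\<lambda>z. \<Sum>q\<in>UNIV. gInv n Q \<Omega> k q z * wd (gWP n Q \<Omega> i q) j z)"
    by (simp add: fun_eq_iff Gam_def)
  moreover have "sm U (\<lambda>z. \<Sum>q\<in>UNIV. gInv n Q \<Omega> k q z * wd (gWP n Q \<Omega> i q) j z)"
    by (intro sm_sum oU sm_mult sm_gInv sm_wd sm_gWP) auto
  ultimately show ?thesis by simp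
qed

lemma D2_eq: "D2 n Q \<Omega> j i = (\<lambda>z. wdv (D1 n Q \<Omega> i) j z - (\<Sum>k\<in>UNIV. Gam n Q \<Omega> k i j z *s D1 n Q \<Omega> k z)
      + Kf n Q \<Omega> j z *s D1 n Q \<Omega> i z)"
  by (simp add: fun_eq_iff D2_def)

lemma smv_D2: "smv U (D2 n Q \<Omega> j i)"
  unfolding D2_eq
  by (intro smv_add smv_diff smv_wdv smv_D1 smv_sum smv_smult sm_Gam sm_K)

lemma LDV_D2: "w \<in> U \<Longrightarrow> LDV (D2 n Q \<Omega> j i) w" by (rule smv_LDV[OF smv_D2])

definition good :: "nat \<Rightarrow> (complex^'m \<Rightarrow> complex^'d) \<Rightarrow> bool" where
  "good p G \<longleftrightarrow> smv U G \<and> (\<forall>w\<in>U. G w \<in> Fil Hd n w p) \<and> (\<forall>w\<in>U. \<forall>k. wdv G k w \<in> Fil Hd n w (p - 1))"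

lemma good_add: assumes "good p F" "good p G" shows "good p (\<lambda>w. F w + G w)"
  unfolding good_def
proof (intro conjI ballI allI)
  show "smv U (\<lambda>w. F w + G w)" using assms smv_add unfolding good_def by blast
  fix w assume w: "w \<in> U"
  show "F w + G w \<in> Fil Hd n w p" using assms w Fil_add[OF w] unfolding good_def by blast
  fix k
  have "wdv (\<lambda>w. F w + G w) k w = wdv F k w + wdv G k w"
    using assms w unfolding good_def by (intro wdv_add smv_LDV) auto
  then show "wdv (\<lambda>w. F w + G w) k w \<in> Fil Hd n w (p - 1)"
    using assms w Fil_add[OF w] unfolding good_def by simp
qed

lemma good_smult: assumes c: "sm U c" and G: "good p G" shows "good p (\<lambda>w. c w *s G w)"
  unfolding good_def
proof (intro conjI ballI allI)
  show "smv U (\<lambda>w. c w *s G w)" using assms smv_smult unfolding good_def by blast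
  fix w assume w: "w \<in> U"
  show "c w *s G w \<in> Fil Hd n w p" using assms w Fil_smult[OF w] unfolding good_def by blast
  fix k
  have "wdv (\<lambda>w. c w *s G w) k w = wd c k w *s G w + c w *s wdv G k w"
    using G w unfolding good_def by (intro wdv_smult sm_LD[OF c w] smv_LDV) auto
  moreover have "G w \<in> Fil Hd n w (p - 1)" using G w Fil_mono[OF w, of "p - 1" p] unfolding good_def by auto
  ultimately show "wdv (\<lambda>w. c w *s G w) k w \<in> Fil Hd n w (p - 1)"
    using G w Fil_add[OF w] Fil_smult[OF w] unfolding good_def by simp
qed

lemma smv_cong: "smv U F \<Longrightarrow> (\<And>w. w \<in> U \<Longrightarrow> F w = G w) \<Longrightarrow> smv U G"
  unfolding smv_def by (auto intro: sm_cong)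

lemma good_cong: assumes F: "good p F" and eq: "\<And>w. w \<in> U \<Longrightarrow> F w = G w" shows "good p G"
  unfolding good_def
proof (intro conjI ballI allI)
  show "smv U G" using F smv_cong eq unfolding good_def by blast
  fix w assume w: "w \<in> U"
  show "G w \<in> Fil Hd n w p" using F w eq unfolding good_def by metis
  fix k
  have "wdv F k w = wdv G k w" by (rule wdv_cong[OF oU w eq])
  then show "wdv G k w \<in> Fil Hd n w (p - 1)" using F w unfolding good_def by metis
qed

lemma good_diff: assumes "good p F" "good p G" shows "good p (\<lambda>w. F w - G w)"
proof (rule good_cong)
  show "good p (\<lambda>w. F w + (\<lambda>w. -1) w *s G w)"
    by (rule good_add[OF assms(1) good_smult[OF sm_const[OF oU] assms(2)]])
  show "F w + (\<lambda>w. -1) w *s G w = F w - G w" for w by (simp add: vec_eq_iff)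
qed

lemma good_sum: assumes g: "\<And>q. good p (F q)" shows "good p (\<lambda>w. \<Sum>q\<in>(UNIV::'k::finite set). F q w)"
  unfolding good_def
proof (intro conjI ballI allI)
  have sv: "smv U (F q)" for q using g[of q] unfolding good_def by blast
  show "smv U (\<lambda>w. \<Sum>q\<in>UNIV. F q w)" by (rule smv_sum[OF sv sv])
  fix w assume w: "w \<in> U"
  show "(\<Sum>q\<in>UNIV. F q w) \<in> Fil Hd n w p"
    by (rule Fil_sum[OF w]) (use g w in \<open>auto simp: good_def\<close>)
  fix k
  have "wdv (\<lambda>w. \<Sum>q\<in>UNIV. F q w) k w = (\<Sum>q\<in>UNIV. wdv (F q) k w)"
    by (rule wdv_sum) (rule smv_LDV[OF sv w])
  moreover have "(\<Sum>q\<in>UNIV. wdv (F q) k w) \<in> Fil Hd n w (p - 1)"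
    by (rule Fil_sum[OF w]) (use g w in \<open>auto simp: good_def\<close>)
  ultimately show "wdv (\<lambda>w. \<Sum>q\<in>(UNIV::'k set). F q w) k w \<in> Fil Hd n w (p - 1)" by simp
qed

lemma good_mono: assumes qp: "q \<le> p" and G: "good p G" shows "good q G"
  unfolding good_def
proof (intro conjI ballI allI)
  show "smv U G" using G unfolding good_def by blast
  fix w assume w: "w \<in> U"
  show "G w \<in> Fil Hd n w q" using G w Fil_mono[OF w qp] unfolding good_def by blast
  fix k
  have "q - 1 \<le> p - 1" using qp by simp
  then show "wdv G k w \<in> Fil Hd n w (q - 1)" using G w Fil_mono[OF w] unfolding good_def by blast
qed

lemma good_holo: assumes "CH U G" "1 \<le> p" "p \<le> n" "\<And>w. w \<in> U \<Longrightarrow> G w \<in> Fil Hd n w p" shows "good p G"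
  unfolding good_def
proof (intro conjI ballI allI)
  show "smv U G" by (rule CH_smv[OF assms(1)])
  fix w assume w: "w \<in> U"
  show "G w \<in> Fil Hd n w p" by (rule assms(4)[OF w])
  fix k
  show "wdv G k w \<in> Fil Hd n w (p - 1)"
    by (rule transv[OF order_refl CH_holo[OF assms(1)] assms(2,3) _ w]) (use assms(4) in blast)
qed

lemma good_Om: "good n \<Omega>"
  by (rule good_holo[OF CH_Om _ le_refl Om_Fil]) (use n3 in auto)
lemma good_A: "good (n - 1) (wdv \<Omega> i)"
  by (rule good_holo[OF CH_A _ _ A_Fil]) (use n3 in auto)
lemma AA_Fil: assumes w: "w \<in> U" shows "wdv (wdv \<Omega> i) j w \<in> Fil Hd n w (n - 2)"
proof -
  have "wdv (wdv \<Omega> i) j w \<in> Fil Hd n w (n - 1 - 1)"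
    by (rule transv[OF order_refl CH_holo[OF CH_A] _ _ _ w]) (use n3 A_Fil in auto)
  then show ?thesis by (simp add: diff_diff_add numeral_2_eq_2)
qed
lemma good_AA: "good (n - 2) (wdv (wdv \<Omega> i) j)"
  by (rule good_holo[OF CH_AA _ _ AA_Fil]) (use n3 in auto)
lemma good_D1: "good (n - 1) (D1 n Q \<Omega> i)"
  unfolding D1_eq by (intro good_add good_A good_mono[OF _ good_smult[OF sm_K good_Om]]) auto

lemma dD1: assumes w: "w \<in> U"
  shows "wdv (D1 n Q \<Omega> i) j w = wdv (wdv \<Omega> i) j w + wd (Kf n Q \<Omega> i) j w *s \<Omega> w + Kf n Q \<Omega> i w *s wdv \<Omega> j w"
proof -
  have "wdv (D1 n Q \<Omega> i) j w = wdv (wdv \<Omega> i) j w + wdv (\<lambda>w. Kf n Q \<Omega> i w *s \<Omega> w) j w"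
    unfolding D1_eq by (rule wdv_add[OF LDV_A[OF w] LDV_smult[OF sm_LD[OF sm_K w] LDV_Om[OF w]]])
  also have "wdv (\<lambda>w. Kf n Q \<Omega> i w *s \<Omega> w) j w = wd (Kf n Q \<Omega> i) j w *s \<Omega> w + Kf n Q \<Omega> i w *s wdv \<Omega> j w"
    by (rule wdv_smult[OF sm_LD[OF sm_K w] LDV_Om[OF w]])
  finally show ?thesis by (simp add: add.assoc)
qed

lemma good_dD1: "good (n - 2) (wdv (D1 n Q \<Omega> i) j)"
proof (rule good_cong)
  show "good (n - 2) (\<lambda>w. wdv (wdv \<Omega> i) j w + wd (Kf n Q \<Omega> i) j w *s \<Omega> w + Kf n Q \<Omega> i w *s wdv \<Omega> j w)"
    by (intro good_add good_AA good_mono[OF _ good_smult[OF sm_wd[OF sm_K] good_Om]]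
        good_mono[OF _ good_smult[OF sm_K good_A]]) auto
  show "wdv (wdv \<Omega> i) j w + wd (Kf n Q \<Omega> i) j w *s \<Omega> w + Kf n Q \<Omega> i w *s wdv \<Omega> j w = wdv (D1 n Q \<Omega> i) j w"
    if "w \<in> U" for w using dD1[OF that] by simp
qed

lemma good_D2: "good (n - 2) (D2 n Q \<Omega> j i)"
  unfolding D2_eq
  by (intro good_add good_diff good_dD1 good_sum good_mono[OF _ good_smult[OF sm_Gam good_D1]]
      good_mono[OF _ good_smult[OF sm_K good_D1]]) auto


lemma D2_Fil: "w \<in> U \<Longrightarrow> D2 n Q \<Omega> j i w \<in> Fil Hd n w (n - 2)"
  using good_D2 unfolding good_def by blast

lemma dD2_Fil: assumes w: "w \<in> U" shows "wdv (D2 n Q \<Omega> j i) k w \<in> Fil Hd n w (n - 3)"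
proof -
  have "wdv (D2 n Q \<Omega> j i) k w \<in> Fil Hd n w (n - 2 - 1)" using good_D2 w unfolding good_def by blast
  moreover have "n - 2 - 1 = n - 3" by simp
  ultimately show ?thesis by simp
qed

lemma wdbv_D1: assumes w: "w \<in> U" shows "wdbv (D1 n Q \<Omega> l) k w = wdb (Kf n Q \<Omega> l) k w *s \<Omega> w"
proof -
  have "wdbv (D1 n Q \<Omega> l) k w = wdbv (wdv \<Omega> l) k w + wdbv (\<lambda>w. Kf n Q \<Omega> l w *s \<Omega> w) k w"
    unfolding D1_eq by (rule wdbv_add[OF LDV_A[OF w] LDV_smult[OF sm_LD[OF sm_K w] LDV_Om[OF w]]])
  also have "wdbv (\<lambda>w. Kf n Q \<Omega> l w *s \<Omega> w) k w = wdb (Kf n Q \<Omega> l) k w *s \<Omega> w + Kf n Q \<Omega> l w *s wdbv \<Omega> k w"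
    by (rule wdbv_smult[OF sm_LD[OF sm_K w] LDV_Om[OF w]])
  finally show ?thesis by (simp add: wdbv_A[OF w] wdbv_Om[OF w])
qed

lemma wd_zero_on: assumes w: "w \<in> U" and z: "\<And>w. w \<in> U \<Longrightarrow> f w = 0" shows "wd f k w = 0"
proof -
  have "wd f k w = wd (\<lambda>w. 0) k w" by (rule wd_cong[OF oU w]) (use z in simp)
  then show ?thesis by (simp add: wd_const)
qed

lemma Q_dD1_Omb: assumes w: "w \<in> U" shows "Q (wdv (D1 n Q \<Omega> i) j w) (vconj (\<Omega> w)) = 0"
proof -
  have "wd (\<lambda>w. Q (D1 n Q \<Omega> i w) (vconj (\<Omega> w))) j w = 0"
    by (rule wd_zero_on[OF w Q_D1_Omb])
  moreover have "wd (\<lambda>w. Q (D1 n Q \<Omega> i w) (vconj (\<Omega> w))) j w =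
     Q (wdv (D1 n Q \<Omega> i) j w) (vconj (\<Omega> w)) + Q (D1 n Q \<Omega> i w) (wdv (\<lambda>w. vconj (\<Omega> w)) j w)"
    by (rule wd_Q[OF cb LDV_D1[OF w] LDV_Omb[OF w]])
  moreover have "wdv (\<lambda>w. vconj (\<Omega> w)) j w = 0"
    using wdv_vconj[OF LDV_Om[OF w]] wdbv_Om[OF w] by (simp add: vconj_zero)
  ultimately show ?thesis by (simp add: cbil_zero_r[OF cb])
qed

lemma Q_D1_D1: assumes w: "w \<in> U"
  shows "Q (D1 n Q \<Omega> k w) (vconj (D1 n Q \<Omega> l w)) = - P w * gWP n Q \<Omega> k l w"
  using G_eq[OF w, of k l] P_nz[OF w] by (simp add: field_simps)

lemma wdP_K: assumes w: "w \<in> U" shows "wd P j w = - Kf n Q \<Omega> j w * P w"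
  using K_eq[OF w, of j] wd_P[OF w, of j] P_nz[OF w] by (simp add: field_simps)

lemma Q_vconj_Om_D1: assumes w: "w \<in> U" shows "Q (D1 n Q \<Omega> i w) (vconj (c *s \<Omega> w)) = 0"
  by (simp add: vconj_smult cbil_smult_r[OF cb] Q_D1_Omb[OF w])

lemma Q_dD1_D1: assumes w: "w \<in> U"
  shows "Q (wdv (D1 n Q \<Omega> i) j w) (vconj (D1 n Q \<Omega> l w)) =
         Kf n Q \<Omega> j w * P w * gWP n Q \<Omega> i l w - P w * wd (gWP n Q \<Omega> i l) j w"
proof -
  have LDm: "LD (\<lambda>w. (-1) * P w) w" by (intro LD_mult LD_const LD_P w)
  have LDg: "LD (gWP n Q \<Omega> i l) w" by (rule sm_LD[OF sm_gWP w])
  have e1: "wd (\<lambda>w. Q (D1 n Q \<Omega> i w) (vconj (D1 n Q \<Omega> l w))) j w =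
            wd (\<lambda>w. (-1) * P w * gWP n Q \<Omega> i l w) j w"
    by (rule wd_cong[OF oU w]) (simp add: Q_D1_D1)
  have e2: "wd (\<lambda>w. Q (D1 n Q \<Omega> i w) (vconj (D1 n Q \<Omega> l w))) j w =
     Q (wdv (D1 n Q \<Omega> i) j w) (vconj (D1 n Q \<Omega> l w)) + Q (D1 n Q \<Omega> i w) (wdv (\<lambda>w. vconj (D1 n Q \<Omega> l w)) j w)"
    by (rule wd_Q[OF cb LDV_D1[OF w] LDV_vconj[OF LDV_D1[OF w]]])
  have e3: "wdv (\<lambda>w. vconj (D1 n Q \<Omega> l w)) j w = vconj (wdb (Kf n Q \<Omega> l) j w *s \<Omega> w)"
    using wdv_vconj[OF LDV_D1[OF w]] wdbv_D1[OF w] by simp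
  have e4: "wd (\<lambda>w. (-1) * P w * gWP n Q \<Omega> i l w) j w =
        wd (\<lambda>w. (-1) * P w) j w * gWP n Q \<Omega> i l w + (-1) * P w * wd (gWP n Q \<Omega> i l) j w"
    by (rule wd_mult[OF LDm LDg])
  have e5: "wd (\<lambda>w. (-1) * P w) j w = - wd P j w"
    by (subst wd_mult[OF LD_const LD_P[OF w]]) (simp add: wd_const)
  show ?thesis
    using e1 e2 e3 e4 e5 Q_vconj_Om_D1[OF w] wdP_K[OF w] by simp
qed

lemma D2_Omb: assumes w: "w \<in> U" shows "Q (D2 n Q \<Omega> j i w) (vconj (\<Omega> w)) = 0"
  unfolding D2_def
  by (simp add: cbil_add_l[OF cb] cbil_diff_l[OF cb] cbil_sum_l[OF cb] cbil_smult_l[OF cb]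
      Q_D1_Omb[OF w] Q_dD1_Omb[OF w])

lemma D2_D1: assumes w: "w \<in> U" shows "Q (D2 n Q \<Omega> j i w) (vconj (D1 n Q \<Omega> l w)) = 0"
proof -
  have s: "(\<Sum>k\<in>UNIV. Gam n Q \<Omega> k i j w * Q (D1 n Q \<Omega> k w) (vconj (D1 n Q \<Omega> l w))) = - P w * wd (gWP n Q \<Omega> i l) j w"
  proof -
    have "(\<Sum>k\<in>UNIV. Gam n Q \<Omega> k i j w * Q (D1 n Q \<Omega> k w) (vconj (D1 n Q \<Omega> l w))) =
          (\<Sum>k\<in>UNIV. (- P w) * (Gam n Q \<Omega> k i j w * gWP n Q \<Omega> k l w))"
      by (rule sum.cong[OF refl]) (simp add: Q_D1_D1[OF w])
    also have "\<dots> = (- P w) * (\<Sum>k\<in>UNIV. Gam n Q \<Omega> k i j w * gWP n Q \<Omega> k l w)"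
      by (rule sum_distrib_left[symmetric])
    also have "\<dots> = - P w * wd (gWP n Q \<Omega> i l) j w" by (simp add: Gam_G[OF w])
    finally show ?thesis .
  qed
  show ?thesis
    by (simp only: D2_def cbil_add_l[OF cb] cbil_diff_l[OF cb] cbil_sum_l[OF cb] cbil_smult_l[OF cb]
      s Q_dD1_D1[OF w] Q_D1_D1[OF w, of i l]) (simp add: algebra_simps)
qed

lemma D2_Hd: assumes w: "w \<in> U" shows "D2 n Q \<Omega> j i w \<in> Hd w (n - 2)"
proof -
  have "D2 n Q \<Omega> j i w = (\<Sum>r\<in>{n-2}. comp w (D2 n Q \<Omega> j i w) r)"
  proof (rule vdecomp[OF w])
    fix r assume r: "r \<le> n" "r \<notin> {n - 2}"
    show "comp w (D2 n Q \<Omega> j i w) r = 0"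
    proof (cases "r = n")
      case True then show ?thesis using testn[OF w D2_Omb[OF w]] by simp
    next
      case False
      show ?thesis
      proof (cases "r = n - 1")
        case True then show ?thesis using testn1[OF w D2_D1[OF w]] by simp
      next
        case False
        then have "r < n - 2" using r \<open>r \<noteq> n\<close> by auto
        then show ?thesis using D2_Fil[OF w] Fil_iff[OF w] by blast
      qed
    qed
  qed auto
  then have e: "D2 n Q \<Omega> j i w = comp w (D2 n Q \<Omega> j i w) (n - 2)" by simp
  show ?thesis by (metis e comp_in[OF w])
qed

lemma Tt_eq: "Tt n Q \<Omega> k a i w = wdv (D2 n Q \<Omega> a i) k w + Kf n Q \<Omega> k w *s D2 n Q \<Omega> a i w
      - (\<Sum>p\<in>UNIV. Gam n Q \<Omega> p a k w *s D2 n Q \<Omega> p i w)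
      - (\<Sum>p\<in>UNIV. Gam n Q \<Omega> p i k w *s D2 n Q \<Omega> a p w)"
  by (simp add: Tt_def)

lemma T_Fil: assumes w: "w \<in> U" shows "Tt n Q \<Omega> k a i w \<in> Fil Hd n w (n - 3)"
proof -
  have F: "D2 n Q \<Omega> j i' w \<in> Fil Hd n w (n - 3)" for j i'
    by (rule Fil_mono[OF w _ D2_Fil[OF w]]) simp
  show ?thesis unfolding Tt_eq
    by (intro Fil_diff[OF w] Fil_add[OF w] dD2_Fil[OF w] Fil_smult[OF w] F Fil_sum[OF w])
qed

lemma dD2_Omb: assumes w: "w \<in> U" shows "Q (wdv (D2 n Q \<Omega> a i) k w) (vconj (\<Omega> w)) = 0"
proof -
  have "wd (\<lambda>w. Q (D2 n Q \<Omega> a i w) (vconj (\<Omega> w))) k w = 0"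
    by (rule wd_zero_on[OF w D2_Omb])
  moreover have "wd (\<lambda>w. Q (D2 n Q \<Omega> a i w) (vconj (\<Omega> w))) k w =
     Q (wdv (D2 n Q \<Omega> a i) k w) (vconj (\<Omega> w)) + Q (D2 n Q \<Omega> a i w) (wdv (\<lambda>w. vconj (\<Omega> w)) k w)"
    by (rule wd_Q[OF cb LDV_D2[OF w] LDV_Omb[OF w]])
  moreover have "wdv (\<lambda>w. vconj (\<Omega> w)) k w = 0"
    using wdv_vconj[OF LDV_Om[OF w]] wdbv_Om[OF w] by (simp add: vconj_zero)
  ultimately show ?thesis by (simp add: cbil_zero_r[OF cb])
qed

lemma dD2_D1: assumes w: "w \<in> U" shows "Q (wdv (D2 n Q \<Omega> a i) k w) (vconj (D1 n Q \<Omega> l w)) = 0"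
proof -
  have "wd (\<lambda>w. Q (D2 n Q \<Omega> a i w) (vconj (D1 n Q \<Omega> l w))) k w = 0"
    by (rule wd_zero_on[OF w D2_D1])
  moreover have "wd (\<lambda>w. Q (D2 n Q \<Omega> a i w) (vconj (D1 n Q \<Omega> l w))) k w =
     Q (wdv (D2 n Q \<Omega> a i) k w) (vconj (D1 n Q \<Omega> l w)) + Q (D2 n Q \<Omega> a i w) (wdv (\<lambda>w. vconj (D1 n Q \<Omega> l w)) k w)"
    by (rule wd_Q[OF cb LDV_D2[OF w] LDV_vconj[OF LDV_D1[OF w]]])
  moreover have "wdv (\<lambda>w. vconj (D1 n Q \<Omega> l w)) k w = vconj (wdb (Kf n Q \<Omega> l) k w *s \<Omega> w)"
    using wdv_vconj[OF LDV_D1[OF w]] wdbv_D1[OF w] by simp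
  moreover have "Q (D2 n Q \<Omega> a i w) (vconj (wdb (Kf n Q \<Omega> l) k w *s \<Omega> w)) = 0"
    by (simp add: vconj_smult cbil_smult_r[OF cb] D2_Omb[OF w])
  ultimately show ?thesis by simp
qed

lemma T_Omb: assumes w: "w \<in> U" shows "Q (Tt n Q \<Omega> k a i w) (vconj (\<Omega> w)) = 0"
  unfolding Tt_eq
  by (simp add: cbil_add_l[OF cb] cbil_diff_l[OF cb] cbil_sum_l[OF cb] cbil_smult_l[OF cb]
      D2_Omb[OF w] dD2_Omb[OF w])

lemma T_D1: assumes w: "w \<in> U" shows "Q (Tt n Q \<Omega> k a i w) (vconj (D1 n Q \<Omega> l w)) = 0"
  unfolding Tt_eq
  by (simp add: cbil_add_l[OF cb] cbil_diff_l[OF cb] cbil_sum_l[OF cb] cbil_smult_l[OF cb]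
      D2_D1[OF w] dD2_D1[OF w])

lemma main: assumes z: "z \<in> U"
  shows "\<exists>E DDD. E \<in> Hd z (n - 2) \<and> DDD \<in> Hd z (n - 3) \<and> Tt n Q \<Omega> k a i z = E + DDD"
proof -
  let ?T = "Tt n Q \<Omega> k a i z"
  have "?T = (\<Sum>r\<in>{n-2, n-3}. comp z ?T r)"
  proof (rule vdecomp[OF z])
    fix r assume r: "r \<le> n" "r \<notin> {n - 2, n - 3}"
    show "comp z ?T r = 0"
    proof (cases "r = n")
      case True then show ?thesis using testn[OF z T_Omb[OF z]] by simp
    next
      case False
      show ?thesis
      proof (cases "r = n - 1")
        case True then show ?thesis using testn1[OF z T_D1[OF z]] by simp
      next
        case False
        then have "r < n - 3" using r \<open>r \<noteq> n\<close> by auto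
        then show ?thesis using T_Fil[OF z] Fil_iff[OF z] by blast
      qed
    qed
  qed auto
  moreover have "n - 2 \<noteq> n - 3" using n3 by simp
  ultimately have "?T = comp z ?T (n - 2) + comp z ?T (n - 3)" by simp
  then show ?thesis using comp_in[OF z] by blast
qed

end

theorem lemma4p1:
  fixes n :: nat and U :: "(complex^'m) set"
    and Q :: "complex^'d \<Rightarrow> complex^'d \<Rightarrow> complex"
    and Hd :: "complex^'m \<Rightarrow> nat \<Rightarrow> (complex^'d) set"
    and \<Omega> :: "complex^'m \<Rightarrow> complex^'d"
  assumes "3 \<le> n"
    and "CY_VHS n U Q Hd \<Omega>"
  shows "\<forall>z\<in>U. \<forall>k \<alpha> i. \<exists>E DDD. E \<in> Hd z (n - 2) \<and> DDD \<in> Hd z (n - 3) \<and>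
           Tt n Q \<Omega> k \<alpha> i z = E + DDD"
  using main[OF assms(2) assms(1)] by blast

end
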